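(* Work in the work extraction game described in the context. Let $\rho$ and $\sigma$ be states on the same number $d=2n+1$ of levels. Assume that each of $\rho$ and $\sigma$ has at least $n+1$ levels with occupation probability $0$ and energy $+\infty$. Let $\varepsilon\in[0,1)$. Then the bound $W^\varepsilon(\rho\to\sigma)$ is achievable in the following sense. For every $\delta>0$ there is a strategy, starting from $\rho$ and ending with the energies of $\sigma$, such that: - with probability at least $1-\varepsilon-\delta$, the total extracted work satisfies $W_{\rm tot}\ge W^\varepsilon(\rho\to\sigma)-\delta$; - conditioned on this event, the distribution of the final occupied level is within total variation distance $\delta$ of the occupation probabilities of $\sigma$. (The paper constructs an explicit protocol realising this as a limit.)
   Context: Conventions. The constants $k>0$ (Boltzmann's constant) and $T>0$ (temperature) are fixed. A state is a finite-level system with energies $E_1,\dots,E_d\in\mathbb{R}\cup\{+\infty\}$, not all $+\infty$, together with a diagonal density matrix $\rho=\sum_i\lambda_i|e_i\rangle\langle e_i|$. Equivalently, it is a probability vector $(\lambda_i)$ over the levels, and we require $\lambda_i=0$ whenever $E_i=+\infty$. Gibbs rescaling. $G^T(\rho)$ is the function on $[0,\infty)$ built as follows. Each level $i$ with $E_i<\infty$ is represented by a block: an interval of length $e^{-E_i/kT}$ on which the function takes the constant value $\lambda_i e^{E_i/kT}$, so the block has area $\lambda_i$. The blocks are placed consecutively starting at $0$, in order of nonincreasing height. The function is $0$ beyond $Z=\sum_{i:E_i<\infty}e^{-E_i/kT}$. Thus $G^T(\rho)$ is a nonincreasing probability density supported in $[0,Z]$. Relative mixedness. For nonincreasing integrable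 functions $f,g\ge 0$ on $[0,\infty)$, $$M(f\|g):=\max\Big\{m>0:\ \int_0^l f(x)\,dx\ge\int_0^{lm}g(x)\,dx\ \text{for all } l\ge 0\Big\}.$$ For $\varepsilon\in[0,1)$ define $$W^\varepsilon(\rho\to\sigma):=kT\ln M\big(G^T(\rho)/(1-\varepsilon)\,\big\|\,G^T(\sigma)\big).$$ Work extraction game. - A working medium has levels $1,\dots,d$. At each time it has an energy assignment $E\in(\mathbb{R}\cup\{+\infty\})^d$ and occupies exactly one (random) level. - For an assignment $E$, the Gibbs vector is $\gamma_E(i)=e^{-E_i/kT}/\sum_j e^{-E_j/kT}$, which is $0$ for levels at $+\infty$. - A strategy is a finite sequence of elementary steps, fixed in advance and independent of the random outcomes. Each step is one of two kinds. - (i) Thermalisation. Choose a $d\times d$ column-stochastic matrix $B$ with $B\gamma_E=\gamma_E$ for the current energies $E$. If the current level is $j$, the new level is $i$ with probability $B_{ij}$. Energies are unchanged and no work is exchanged. - (ii) Energy change. Choose a set $S$ of levels and new values for the energies of the levels in $S$; the other energies are unchanged and the occupied level is unchanged. If the occupied level $i$ lies in $S$, the work reservoir receives extracted work $E_i^{\rm old}-E_i^{\rm new}$; otherwise it receives $0$. (The paper changes all levels in $S$ by a common amount; arbitrary changes are compositions of such steps.) - The total extracted work $W_{\rm tot}$ is the sum over steps. By convention, a realisation in which some step yields work $-\infty$ (an occupied level raised to $+\infty$) has $W_{\rm tot}=-\infty$. - The initial energies are those of $\rho$ and the initial occupied level is distributed according to $\rho$'s occupation probabilities. *)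

theory Defs
  imports "HOL-Analysis.Analysis" "HOL-Library.Extended_Real"
begin

text \<open>Energies take values in ereal; the
  value -\<infinity> is excluded by validity conditions, +\<infinity> is allowed.
  k is Boltzmann's constant and T the temperature (both passed explicitly).\<close>

definition is_state :: "nat \<Rightarrow> (nat \<Rightarrow> ereal) \<Rightarrow> (nat \<Rightarrow> real) \<Rightarrow> bool" where
  "is_state d E lam \<longleftrightarrow>
     (\<forall>i<d. E i \<noteq> -\<infinity>) \<and> (\<exists>i<d. E i \<noteq> \<infinity>) \<and>
     (\<forall>i<d. 0 \<le> lam i) \<and> (\<Sum>i<d. lam i) = 1 \<and>
     (\<forall>i<d. E i = \<infinity> \<longrightarrow> lam i = 0)"

definition bweight :: "real \<Rightarrow> real \<Rightarrow> ereal \<Rightarrow> real" where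
  "bweight k T e = (if e = \<infinity> then 0 else exp (- real_of_ereal e / (k * T)))"

definition block_height :: "real \<Rightarrow> real \<Rightarrow> (nat \<Rightarrow> ereal) \<Rightarrow> (nat \<Rightarrow> real) \<Rightarrow> nat \<Rightarrow> real" where
  "block_height k T E lam i = lam i * exp (real_of_ereal (E i) / (k * T))"

definition finite_levels :: "nat \<Rightarrow> (nat \<Rightarrow> ereal) \<Rightarrow> nat set" where
  "finite_levels d E = {i. i < d \<and> E i \<noteq> \<infinity>}"

text \<open>Start of the block of level i: blocks are ordered by nonincreasing height,
  ties broken by the level index.\<close>
definition block_start :: "real \<Rightarrow> real \<Rightarrow> nat \<Rightarrow> (nat \<Rightarrow> ereal) \<Rightarrow> (nat \<Rightarrow> real) \<Rightarrow> nat \<Rightarrow> real" where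
  "block_start k T d E lam i =
     (\<Sum>j \<in> {j \<in> finite_levels d E.
              block_height k T E lam j > block_height k T E lam i \<or>
              (block_height k T E lam j = block_height k T E lam i \<and> j < i)}.
        bweight k T (E j))"

definition gibbs_rescaling :: "real \<Rightarrow> real \<Rightarrow> nat \<Rightarrow> (nat \<Rightarrow> ereal) \<Rightarrow> (nat \<Rightarrow> real) \<Rightarrow> real \<Rightarrow> real" where
  "gibbs_rescaling k T d E lam x =
     (\<Sum>i \<in> finite_levels d E.
        if block_start k T d E lam i \<le> x \<and> x < block_start k T d E lam i + bweight k T (E i)
        then block_height k T E lam i else 0)"

definition rel_mixedness :: "(real \<Rightarrow> real) \<Rightarrow> (real \<Rightarrow> real) \<Rightarrow> real" where
  "rel_mixedness f g =
     (GREATEST m. m > 0 \<and> (\<forall>l\<ge>0. integral {0..l} f \<ge> integral {0..l * m} g))"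

definition work_bound :: "real \<Rightarrow> real \<Rightarrow> nat \<Rightarrow> real \<Rightarrow>
    (nat \<Rightarrow> ereal) \<Rightarrow> (nat \<Rightarrow> real) \<Rightarrow> (nat \<Rightarrow> ereal) \<Rightarrow> (nat \<Rightarrow> real) \<Rightarrow> real" where
  "work_bound k T d \<epsilon> E\<rho> lam\<rho> E\<sigma> lam\<sigma> =
     k * T * ln (rel_mixedness (\<lambda>x. gibbs_rescaling k T d E\<rho> lam\<rho> x / (1 - \<epsilon>))
                               (gibbs_rescaling k T d E\<sigma> lam\<sigma>))"

datatype step =
    Therm "nat \<Rightarrow> nat \<Rightarrow> real"   \<comment> \<open>B i j = probability of moving from level j to level i\<close>
  | Change "nat set" "nat \<Rightarrow> ereal"

definition gibbs_vec :: "real \<Rightarrow> real \<Rightarrow> nat \<Rightarrow> (nat \<Rightarrow> ereal) \<Rightarrow> nat \<Rightarrow> real" where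
  "gibbs_vec k T d E i = bweight k T (E i) / (\<Sum>j<d. bweight k T (E j))"

fun apply_step :: "(nat \<Rightarrow> ereal) \<Rightarrow> step \<Rightarrow> (nat \<Rightarrow> ereal)" where
  "apply_step E (Therm B) = E"
| "apply_step E (Change S F) = (\<lambda>i. if i \<in> S then F i else E i)"

fun valid_step :: "real \<Rightarrow> real \<Rightarrow> nat \<Rightarrow> (nat \<Rightarrow> ereal) \<Rightarrow> step \<Rightarrow> bool" where
  "valid_step k T d E (Therm B) \<longleftrightarrow>
     (\<forall>i<d. \<forall>j<d. 0 \<le> B i j) \<and> (\<forall>j<d. (\<Sum>i<d. B i j) = 1) \<and>
     (\<forall>i<d. (\<Sum>j<d. B i j * gibbs_vec k T d E j) = gibbs_vec k T d E i)"
| "valid_step k T d E (Change S F) \<longleftrightarrow> S \<subseteq> {..<d} \<and> (\<forall>i\<in>S. F i \<noteq> -\<infinity>)"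

fun valid_strategy :: "real \<Rightarrow> real \<Rightarrow> nat \<Rightarrow> (nat \<Rightarrow> ereal) \<Rightarrow> step list \<Rightarrow> bool" where
  "valid_strategy k T d E [] = True"
| "valid_strategy k T d E (s # ss) \<longleftrightarrow> valid_step k T d E s \<and> valid_strategy k T d (apply_step E s) ss"

definition final_energies :: "(nat \<Rightarrow> ereal) \<Rightarrow> step list \<Rightarrow> (nat \<Rightarrow> ereal)" where
  "final_energies E ss = foldl apply_step E ss"

fun step_factor :: "step \<Rightarrow> nat \<Rightarrow> nat \<Rightarrow> real" where
  "step_factor (Therm B) j i = B i j"
| "step_factor (Change S F) j i = (if i = j then 1 else 0)"

fun step_work :: "(nat \<Rightarrow> ereal) \<Rightarrow> step \<Rightarrow> nat \<Rightarrow> ereal" where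
  "step_work E (Therm B) j = 0"
| "step_work E (Change S F) j = (if j \<in> S then E j - F j else 0)"

text \<open>A realisation: initial level j and the list of levels occupied after each step.\<close>
fun path_prob :: "step list \<Rightarrow> nat \<Rightarrow> nat list \<Rightarrow> real" where
  "path_prob [] j [] = 1"
| "path_prob (s # ss) j (i # is) = step_factor s j i * path_prob ss i is"
| "path_prob _ _ _ = 0"

fun path_works :: "(nat \<Rightarrow> ereal) \<Rightarrow> step list \<Rightarrow> nat \<Rightarrow> nat list \<Rightarrow> ereal list" where
  "path_works E (s # ss) j (i # is) = step_work E s j # path_works (apply_step E s) ss i is"
| "path_works E _ _ _ = []"

definition total_work :: "(nat \<Rightarrow> ereal) \<Rightarrow> step list \<Rightarrow> nat \<Rightarrow> nat list \<Rightarrow> ereal" where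
  "total_work E ss j ls =
     (let ws = path_works E ss j ls in if -\<infinity> \<in> set ws then -\<infinity> else sum_list ws)"

definition paths :: "nat \<Rightarrow> nat \<Rightarrow> nat list set" where
  "paths d m = {ls. length ls = m \<and> set ls \<subseteq> {..<d}}"

definition prob_event :: "nat \<Rightarrow> (nat \<Rightarrow> real) \<Rightarrow> step list \<Rightarrow> (nat \<Rightarrow> nat list \<Rightarrow> bool) \<Rightarrow> real" where
  "prob_event d lam ss P =
     (\<Sum>j<d. \<Sum>ls \<in> paths d (length ss). if P j ls then lam j * path_prob ss j ls else 0)"

definition final_level :: "nat \<Rightarrow> nat list \<Rightarrow> nat" where
  "final_level j ls = last (j # ls)"

end

theory Submission
  imports Defs
begin

definition ov :: "real \<Rightarrow> real \<Rightarrow> real \<Rightarrow> real \<Rightarrow> real" where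
  "ov s w lo hi = max 0 (min (s + w) hi - max s lo)"

lemma ov_nonneg: "0 \<le> ov s w lo hi" by (simp add: ov_def)

lemma ov_le_w: "w \<ge> 0 \<Longrightarrow> ov s w lo hi \<le> w" by (simp add: ov_def)

lemma ov_split: "s \<ge> 0 \<Longrightarrow> w \<ge> 0 \<Longrightarrow> \<alpha> \<ge> 0 \<Longrightarrow> u \<ge> 0 \<Longrightarrow>
   ov s w 0 (\<alpha>+u) - ov s w 0 \<alpha> = ov s w \<alpha> (\<alpha>+u)"
  by (simp add: ov_def max_def min_def)

lemma ov_remove: "s \<ge> 0 \<Longrightarrow> w \<ge> 0 \<Longrightarrow> \<alpha> \<ge> 0 \<Longrightarrow> u \<ge> 0 \<Longrightarrow> y \<ge> 0 \<Longrightarrow>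
   ov (s - ov \<alpha> u 0 s) (w - ov s w \<alpha> (\<alpha>+u)) 0 y =
   (if y \<le> \<alpha> then ov s w 0 y else ov s w 0 (y+u) - ov s w \<alpha> (\<alpha>+u))"
  by (simp add: ov_def max_def min_def)

lemma ov_shift: "s \<ge> u \<Longrightarrow> u \<ge> 0 \<Longrightarrow> y \<ge> 0 \<Longrightarrow> ov (s - u) w 0 y = ov s w 0 (y + u)"
  by (simp add: ov_def max_def min_def)

lemma ov_scale: "M > 0 \<Longrightarrow> M * ov (s/M) (w/M) 0 y = ov s w 0 (y*M)"
proof -
  assume M: "M > 0"
  have "M * ov (s/M) (w/M) 0 y = max 0 (min (M*(s/M) + M*(w/M)) (M*y) - max (M*(s/M)) 0)"
    using M unfolding ov_def
    by (simp add: max_mult_distrib_left min_mult_distrib_left distrib_left right_diff_distrib)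
  also have "\<dots> = ov s w 0 (y*M)" using M by (simp add: ov_def mult.commute)
  finally show ?thesis .
qed

lemma ov_measure: "w \<ge> 0 \<Longrightarrow> ov s w lo hi = measure lborel ({s..<s+w} \<inter> {lo..<hi})"
proof -
  have "{s..<s+w} \<inter> {lo..<hi} = {max s lo ..< min (s+w) hi}" by auto
  thus "w \<ge> 0 \<Longrightarrow> ?thesis"
    by (cases "max s lo \<le> min (s+w) hi") (auto simp: ov_def)
qed

definition disj_blocks :: "'a set \<Rightarrow> ('a \<Rightarrow> real) \<Rightarrow> ('a \<Rightarrow> real) \<Rightarrow> bool" where
  "disj_blocks I s w \<longleftrightarrow> (\<forall>i\<in>I. \<forall>j\<in>I. i \<noteq> j \<longrightarrow> s i + w i \<le> s j \<or> s j + w j \<le> s i)"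

lemma emeasure_Ico_fin: "emeasure lborel {a..<b::real} \<noteq> \<infinity>"
  by (cases "a \<le> b") auto

lemma sum_ov_le:
  assumes "finite I" "disj_blocks I s w" "\<And>i. i \<in> I \<Longrightarrow> w i \<ge> 0"
  shows "(\<Sum>i\<in>I. ov (s i) (w i) lo hi) \<le> max 0 (hi - lo)"
proof -
  let ?A = "\<lambda>i. {s i..<s i + w i} \<inter> {lo..<hi}"
  have dj: "disjoint_family_on ?A I"
    unfolding disjoint_family_on_def using assms(2) unfolding disj_blocks_def
    by (auto; fastforce)
  have "(\<Sum>i\<in>I. ov (s i) (w i) lo hi) = (\<Sum>i\<in>I. measure lborel (?A i))"
    using assms(3) by (simp add: ov_measure)
  also have "\<dots> = measure lborel (\<Union>i\<in>I. ?A i)"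
    by (rule measure_finite_Union[symmetric]) (use assms(1) dj emeasure_Ico_fin in \<open>auto\<close>)
  also have "\<dots> \<le> measure lborel {lo..<hi}"
    by (rule measure_mono_fmeasurable)
       (use assms(1) emeasure_Ico_fin[of lo hi] in \<open>auto simp: fmeasurable_def top.not_eq_extremum\<close>)
  also have "\<dots> = max 0 (hi - lo)" 
    by (cases "lo \<le> hi") auto
  finally show ?thesis .
qed



definition LB :: "nat set \<Rightarrow> (nat \<Rightarrow> real) \<Rightarrow> (nat \<Rightarrow> real) \<Rightarrow> (nat \<Rightarrow> real) \<Rightarrow> real \<Rightarrow> real" where
  "LB A w h s y = (\<Sum>a\<in>A. h a * ov (s a) (w a) 0 y)"

definition st :: "nat set \<Rightarrow> (nat \<Rightarrow> nat \<Rightarrow> bool) \<Rightarrow> (nat \<Rightarrow> real) \<Rightarrow> nat \<Rightarrow> real" where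
  "st C lt u c = (\<Sum>c'\<in>{c'\<in>C. lt c' c}. u c')"

definition LT :: "nat set \<Rightarrow> (nat \<Rightarrow> nat \<Rightarrow> bool) \<Rightarrow> (nat \<Rightarrow> real) \<Rightarrow> (nat \<Rightarrow> real) \<Rightarrow> real \<Rightarrow> real" where
  "LT C lt u t y = (\<Sum>c\<in>C. (t c / u c) * ov (st C lt u c) (u c) 0 y)"

definition tgt_ok :: "nat set \<Rightarrow> (nat \<Rightarrow> nat \<Rightarrow> bool) \<Rightarrow> (nat \<Rightarrow> real) \<Rightarrow> (nat \<Rightarrow> real) \<Rightarrow> bool" where
  "tgt_ok C lt u t \<longleftrightarrow> finite C \<and> (\<forall>c\<in>C. u c > 0 \<and> t c \<ge> 0) \<and> (\<forall>c\<in>C. \<not> lt c c) \<and>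
     (\<forall>a\<in>C. \<forall>b\<in>C. \<forall>c\<in>C. lt a b \<longrightarrow> lt b c \<longrightarrow> lt a c) \<and>
     (\<forall>a\<in>C. \<forall>b\<in>C. a \<noteq> b \<longrightarrow> lt a b \<or> lt b a) \<and>
     (\<forall>a\<in>C. \<forall>b\<in>C. lt a b \<longrightarrow> t b / u b \<le> t a / u a)"

lemma st_nonneg: "tgt_ok C lt u t \<Longrightarrow> st C lt u c \<ge> 0"
  unfolding st_def tgt_ok_def by (intro sum_nonneg) (auto simp: less_imp_le)

lemma st_mono:
  assumes ok: "tgt_ok C lt u t" and c: "c \<in> C" "c' \<in> C" "lt c c'"
  shows "st C lt u c + u c \<le> st C lt u c'"
proof -
  have fin: "finite C" using ok by (simp add: tgt_ok_def)
  have sub: "insert c {x\<in>C. lt x c} \<subseteq> {x\<in>C. lt x c'}"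
    using ok c unfolding tgt_ok_def by blast
  have nc: "c \<notin> {x\<in>C. lt x c}" using ok c unfolding tgt_ok_def by blast
  have "st C lt u c + u c = (\<Sum>x\<in>insert c {x\<in>C. lt x c}. u x)"
    using fin nc by (simp add: st_def)
  also have "\<dots> \<le> (\<Sum>x\<in>{x\<in>C. lt x c'}. u x)"
    by (rule sum_mono2) (use fin sub ok in \<open>auto simp: tgt_ok_def less_imp_le\<close>)
  finally show ?thesis by (simp add: st_def)
qed

lemma tgt_disj: "tgt_ok C lt u t \<Longrightarrow> disj_blocks C (st C lt u) u"
  unfolding disj_blocks_def
proof (intro ballI impI)
  fix i j assume ok: "tgt_ok C lt u t" and ij: "i \<in> C" "j \<in> C" "i \<noteq> j"
  then have "lt i j \<or> lt j i" by (auto simp: tgt_ok_def)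
  thus "st C lt u i + u i \<le> st C lt u j \<or> st C lt u j + u j \<le> st C lt u i"
    using st_mono[OF ok] ij by blast
qed

lemma st_min: "tgt_ok C lt u t \<Longrightarrow> c1 \<in> C \<Longrightarrow> (\<forall>c\<in>C. \<not> lt c c1) \<Longrightarrow> st C lt u c1 = 0"
proof -
  assume a: "\<forall>c\<in>C. \<not> lt c c1"
  have e: "{c'\<in>C. lt c' c1} = {}" using a by blast
  show ?thesis unfolding st_def e by simp
qed

lemma min_front:
  assumes ok: "tgt_ok C lt u t" and c1: "c1 \<in> C" "\<forall>c\<in>C. \<not> lt c c1" and c: "c \<in> C" "c \<noteq> c1"
  shows "lt c1 c" "st C lt u c \<ge> u c1" "t c / u c \<le> t c1 / u c1"
proof -
  show l: "lt c1 c" using ok c1 c unfolding tgt_ok_def by blast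
  show "st C lt u c \<ge> u c1" using st_mono[OF ok c1(1) c(1) l] st_min[OF ok c1] by simp
  show "t c / u c \<le> t c1 / u c1" using ok c1 c l unfolding tgt_ok_def by blast
qed

lemma LT_window:
  assumes ok: "tgt_ok C lt u t" and c1: "c1 \<in> C" "\<forall>c\<in>C. \<not> lt c c1" and y: "y \<ge> 0"
  shows "LT C lt u t (y + u c1) - LT C lt u t y \<le> t c1"
proof -
  have fin: "finite C" and pos: "\<And>c. c \<in> C \<Longrightarrow> u c > 0 \<and> t c \<ge> 0" using ok by (auto simp: tgt_ok_def)
  have "LT C lt u t (y + u c1) - LT C lt u t y =
        (\<Sum>c\<in>C. (t c / u c) * ov (st C lt u c) (u c) y (y + u c1))"
    unfolding LT_def sum_subtractf[symmetric] right_diff_distrib[symmetric]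
    by (intro sum.cong refl arg_cong2[where f="(*)"] ov_split)
       (use pos st_nonneg[OF ok] y pos[OF c1(1)] in \<open>auto simp: less_imp_le\<close>)
  also have "\<dots> \<le> (\<Sum>c\<in>C. (t c1 / u c1) * ov (st C lt u c) (u c) y (y + u c1))"
  proof (intro sum_mono mult_right_mono ov_nonneg)
    fix c assume "c \<in> C" thus "t c / u c \<le> t c1 / u c1"
      using min_front[OF ok c1] by (cases "c = c1") auto
  qed
  also have "\<dots> = (t c1 / u c1) * (\<Sum>c\<in>C. ov (st C lt u c) (u c) y (y + u c1))"
    by (simp add: sum_distrib_left)
  also have "\<dots> \<le> (t c1 / u c1) * max 0 (y + u c1 - y)"
    by (intro mult_left_mono sum_ov_le tgt_disj[OF ok] fin)
       (use pos c1 in \<open>auto simp: less_imp_le\<close>)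
  also have "\<dots> = t c1" using pos[OF c1(1)] by simp
  finally show ?thesis .
qed

lemma LT_remove:
  assumes ok: "tgt_ok C lt u t" and c1: "c1 \<in> C" "\<forall>c\<in>C. \<not> lt c c1" and y: "y \<ge> 0"
  shows "LT (C - {c1}) lt u t y = LT C lt u t (y + u c1) - t c1"
proof -
  have fin: "finite C" and pos: "\<And>c. c \<in> C \<Longrightarrow> u c > 0 \<and> t c \<ge> 0" using ok by (auto simp: tgt_ok_def)
  have stC: "st (C - {c1}) lt u c = st C lt u c - u c1" if c: "c \<in> C" "c \<noteq> c1" for c
  proof -
    have "{x\<in>C. lt x c} = insert c1 {x\<in>C - {c1}. lt x c}" using min_front(1)[OF ok c1 c] c1 by auto
    thus ?thesis using fin by (simp add: st_def)
  qed
  have "LT C lt u t (y + u c1) = (t c1 / u c1) * ov 0 (u c1) 0 (y + u c1) +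
          (\<Sum>c\<in>C - {c1}. (t c / u c) * ov (st C lt u c) (u c) 0 (y + u c1))"
    unfolding LT_def using fin c1 st_min[OF ok c1] by (simp add: sum.remove)
  also have "(t c1 / u c1) * ov 0 (u c1) 0 (y + u c1) = t c1"
    using pos[OF c1(1)] y by (simp add: ov_def)
  also have "(\<Sum>c\<in>C - {c1}. (t c / u c) * ov (st C lt u c) (u c) 0 (y + u c1)) = LT (C - {c1}) lt u t y"
    unfolding LT_def
    apply (intro sum.cong refl arg_cong2[where f="(*)"])
    subgoal for x using ov_shift[of "u c1" "st C lt u x" y "u x"] stC[of x] min_front(2)[OF ok c1, of x] pos[OF c1(1)] y
      by auto
    done
  finally show ?thesis by simp
qed

lemma LT_first:
  assumes ok: "tgt_ok C lt u t" and c1: "c1 \<in> C" "\<forall>c\<in>C. \<not> lt c c1"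
  shows "LT C lt u t (u c1) = t c1"
  using LT_remove[OF ok c1, of 0] unfolding LT_def by (simp add: ov_def)

lemma tgt_ok_remove: "tgt_ok C lt u t \<Longrightarrow> tgt_ok (C - {c1}) lt u t"
  unfolding tgt_ok_def by blast



definition src_ok :: "nat set \<Rightarrow> (nat \<Rightarrow> real) \<Rightarrow> (nat \<Rightarrow> real) \<Rightarrow> (nat \<Rightarrow> real) \<Rightarrow> bool" where
  "src_ok A w h s \<longleftrightarrow> finite A \<and> (\<forall>a\<in>A. w a \<ge> 0 \<and> h a \<ge> 0 \<and> s a \<ge> 0) \<and> disj_blocks A s w"

lemma LB_cont: "continuous_on X (LB A w h s)"
  unfolding LB_def ov_def by (intro continuous_intros)

lemma LB_diff: "src_ok A w h s \<Longrightarrow> \<alpha> \<ge> 0 \<Longrightarrow> u \<ge> 0 \<Longrightarrow>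
  LB A w h s (\<alpha> + u) - LB A w h s \<alpha> = (\<Sum>a\<in>A. h a * ov (s a) (w a) \<alpha> (\<alpha> + u))"
  unfolding LB_def sum_subtractf[symmetric] right_diff_distrib[symmetric] src_ok_def
  by (intro sum.cong refl arg_cong2[where f="(*)"] ov_split) auto

lemma LB_remove:
  assumes ok: "src_ok A w h s" and a: "\<alpha> \<ge> 0" "u \<ge> 0" and y: "y \<ge> 0"
  shows "LB A (\<lambda>a. w a - ov (s a) (w a) \<alpha> (\<alpha>+u)) h (\<lambda>a. s a - ov \<alpha> u 0 (s a)) y =
    (if y \<le> \<alpha> then LB A w h s y else LB A w h s (y + u) - (LB A w h s (\<alpha> + u) - LB A w h s \<alpha>))"
proof (cases "y \<le> \<alpha>")
  case True
  thus ?thesis unfolding LB_def using ok a y ov_remove by (auto simp: src_ok_def intro!: sum.cong)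
next
  case False
  have "LB A (\<lambda>a. w a - ov (s a) (w a) \<alpha> (\<alpha>+u)) h (\<lambda>a. s a - ov \<alpha> u 0 (s a)) y =
     (\<Sum>a\<in>A. h a * (ov (s a) (w a) 0 (y+u) - ov (s a) (w a) \<alpha> (\<alpha>+u)))"
    unfolding LB_def using ok a y ov_remove False by (auto simp: src_ok_def intro!: sum.cong)
  also have "\<dots> = LB A w h s (y + u) - (\<Sum>a\<in>A. h a * ov (s a) (w a) \<alpha> (\<alpha> + u))"
    unfolding LB_def by (simp add: right_diff_distrib sum_subtractf)
  finally show ?thesis using LB_diff[OF ok a] False by simp
qed

lemma disj_step:
  assumes "s1 + w1 \<le> s2" "s1 \<ge> 0" "w1 \<ge> 0" "s2 \<ge> 0" "w2 \<ge> 0" "\<alpha> \<ge> 0" "u \<ge> 0"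
  shows "(s1 - ov \<alpha> u 0 s1) + (w1 - ov s1 w1 \<alpha> (\<alpha>+u)) \<le> s2 - ov \<alpha> u 0 s2"
  using assms by (simp add: ov_def max_def min_def)

lemma src_ok_remove:
  assumes ok: "src_ok A w h s" and a: "\<alpha> \<ge> 0" "u \<ge> 0"
  shows "src_ok A (\<lambda>a. w a - ov (s a) (w a) \<alpha> (\<alpha>+u)) h (\<lambda>a. s a - ov \<alpha> u 0 (s a))"
proof -
  have nn: "\<And>a. a \<in> A \<Longrightarrow> w a - ov (s a) (w a) \<alpha> (\<alpha>+u) \<ge> 0 \<and> s a - ov \<alpha> u 0 (s a) \<ge> 0"
    using ok a by (auto simp: src_ok_def ov_def max_def min_def)
  show ?thesis using ok nn disj_step a unfolding src_ok_def disj_blocks_def by (meson order_trans)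
qed

lemma exists_min:
  assumes ok: "tgt_ok C lt u t" and ne: "C \<noteq> {}"
  shows "\<exists>c1\<in>C. \<forall>c\<in>C. \<not> lt c c1"
proof -
  have fin: "finite C" using ok by (simp add: tgt_ok_def)
  let ?m = "Min (st C lt u ` C)"
  have "?m \<in> st C lt u ` C" using fin ne by simp
  then obtain c1 where c1: "c1 \<in> C" "st C lt u c1 = ?m" by auto
  have "\<not> lt c c1" if c: "c \<in> C" for c
  proof
    assume l: "lt c c1"
    have "st C lt u c + u c \<le> st C lt u c1" by (rule st_mono[OF ok c c1(1) l])
    moreover have "u c > 0" using ok c by (simp add: tgt_ok_def)
    moreover have "?m \<le> st C lt u c" using fin c by simp
    ultimately show False using c1 by simp
  qed
  thus ?thesis using c1 by blast
qed



lemma tgt_okD: assumes "tgt_ok C lt u t" shows "finite C" "\<And>c. c \<in> C \<Longrightarrow> u c > 0" "\<And>c. c \<in> C \<Longrightarrow> t c \<ge> 0"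
  using assms unfolding tgt_ok_def by blast+

lemma core_n:
  "\<forall>C w s. tgt_ok C lt u t \<and> card C = n \<and> src_ok A w h s \<and> (\<forall>y\<ge>0. LB A w h s y \<ge> LT C lt u t y) \<longrightarrow>
     (\<exists>G::nat\<Rightarrow>nat\<Rightarrow>real. (\<forall>c a. G c a \<ge> 0) \<and> (\<forall>a\<in>A. (\<Sum>c\<in>C. G c a) \<le> w a) \<and>
        (\<forall>c\<in>C. (\<Sum>a\<in>A. G c a) \<le> u c) \<and> (\<forall>c\<in>C. (\<Sum>a\<in>A. G c a * h a) = t c))"
proof (induction n)
  case 0
  show ?case
  proof (intro allI impI)
    fix C w s assume H: "tgt_ok C lt u t \<and> card C = 0 \<and> src_ok A w h s \<and> (\<forall>y\<ge>0. LB A w h s y \<ge> LT C lt u t y)"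
    hence C0: "C = {}" using tgt_okD(1)[of C lt u t] by auto
    have wA: "\<forall>a\<in>A. 0 \<le> w a" using H unfolding src_ok_def by blast
    show "\<exists>G::nat\<Rightarrow>nat\<Rightarrow>real. (\<forall>c a. G c a \<ge> 0) \<and> (\<forall>a\<in>A. (\<Sum>c\<in>C. G c a) \<le> w a) \<and>
        (\<forall>c\<in>C. (\<Sum>a\<in>A. G c a) \<le> u c) \<and> (\<forall>c\<in>C. (\<Sum>a\<in>A. G c a * h a) = t c)"
      using wA C0 by (intro exI[of _ "\<lambda>c a. 0"]) simp
  qed
next
  case (Suc n)
  show ?case
  proof (intro allI impI)
    fix C w s assume H: "tgt_ok C lt u t \<and> card C = Suc n \<and> src_ok A w h s \<and> (\<forall>y\<ge>0. LB A w h s y \<ge> LT C lt u t y)"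
    have ok: "tgt_ok C lt u t" and cC: "card C = Suc n" and sok: "src_ok A w h s"
      and dom: "\<And>y. y \<ge> 0 \<Longrightarrow> LB A w h s y \<ge> LT C lt u t y" using H by auto
    have fin: "finite C" using tgt_okD(1)[OF ok] .
    have finA: "finite A" using sok by (simp add: src_ok_def)
    have "C \<noteq> {}" using cC by auto
    then obtain c1 where c1: "c1 \<in> C" "\<forall>c\<in>C. \<not> lt c c1" using exists_min[OF ok] by blast
    have u1: "u c1 > 0" and t1: "t c1 \<ge> 0" using tgt_okD(2,3)[OF ok c1(1)] by auto
    define \<phi> where "\<phi> = (\<lambda>\<alpha>. LB A w h s (\<alpha> + u c1) - LB A w h s \<alpha>)"
    define R where "R = (\<Sum>a\<in>A. s a + w a)"
    have R0: "R \<ge> 0" unfolding R_def using sok by (auto simp: src_ok_def intro!: sum_nonneg)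
    have Ra: "s a + w a \<le> R" if "a \<in> A" for a
      unfolding R_def using sok that
      by (intro member_le_sum) (auto simp: src_ok_def)
    have phiR: "\<phi> R = 0"
    proof -
      have "\<phi> R = (\<Sum>a\<in>A. h a * ov (s a) (w a) R (R + u c1))"
        unfolding \<phi>_def by (rule LB_diff[OF sok R0]) (use u1 in simp)
      also have "\<dots> = 0"
      proof (intro sum.neutral ballI)
        fix a assume "a \<in> A"
        hence "ov (s a) (w a) R (R + u c1) = 0" using Ra[of a] u1 unfolding ov_def by (simp add: max_def min_def)
        thus "h a * ov (s a) (w a) R (R + u c1) = 0" by simp
      qed
      finally show ?thesis .
    qed
    have phi0: "\<phi> 0 \<ge> t c1"
    proof -
      have "\<phi> 0 = LB A w h s (u c1)" unfolding \<phi>_def LB_def ov_def by simp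
      also have "\<dots> \<ge> LT C lt u t (u c1)" using dom u1 by simp
      finally show ?thesis using LT_first[OF ok c1] by simp
    qed
    have "\<exists>\<alpha>. 0 \<le> \<alpha> \<and> \<alpha> \<le> R \<and> \<phi> \<alpha> = t c1"
    proof (rule IVT2')
      show "\<phi> R \<le> t c1" "t c1 \<le> \<phi> 0" "0 \<le> R" using phiR phi0 t1 R0 by auto
      show "continuous_on {0..R} \<phi>" unfolding \<phi>_def LB_def ov_def by (intro continuous_intros)
    qed
    then obtain \<alpha> where al: "0 \<le> \<alpha>" "\<phi> \<alpha> = t c1" by blast
    define w' where "w' = (\<lambda>a. w a - ov (s a) (w a) \<alpha> (\<alpha> + u c1))"
    define s' where "s' = (\<lambda>a. s a - ov \<alpha> (u c1) 0 (s a))"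
    have sok': "src_ok A w' h s'" unfolding w'_def s'_def by (rule src_ok_remove[OF sok al(1)]) (use u1 in simp)
    have ok': "tgt_ok (C - {c1}) lt u t" by (rule tgt_ok_remove[OF ok])
    have cC': "card (C - {c1}) = n" using cC c1 fin by simp
    have dom': "LB A w' h s' y \<ge> LT (C - {c1}) lt u t y" if y: "y \<ge> 0" for y
    proof -
      have L: "LB A w' h s' y = (if y \<le> \<alpha> then LB A w h s y else LB A w h s (y + u c1) - t c1)"
        unfolding w'_def s'_def using LB_remove[OF sok al(1) _ y, of "u c1"] u1 al(2)
        by (simp add: \<phi>_def)
      have R: "LT (C - {c1}) lt u t y = LT C lt u t (y + u c1) - t c1" by (rule LT_remove[OF ok c1 y])
      show ?thesis
      proof (cases "y \<le> \<alpha>")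
        case True
        then show ?thesis using L R dom[OF y] LT_window[OF ok c1 y] by simp
      next
        case False
        then show ?thesis using L R dom[of "y + u c1"] y u1 by simp
      qed
    qed
    have pre: "tgt_ok (C - {c1}) lt u t \<and> card (C - {c1}) = n \<and> src_ok A w' h s' \<and>
       (\<forall>y\<ge>0. LB A w' h s' y \<ge> LT (C - {c1}) lt u t y)" using ok' cC' sok' dom' by blast
    obtain G' where G': "\<forall>c a. G' c a \<ge> 0" "\<forall>a\<in>A. (\<Sum>c\<in>C - {c1}. G' c a) \<le> w' a"
        "\<forall>c\<in>C - {c1}. (\<Sum>a\<in>A. G' c a) \<le> u c" "\<forall>c\<in>C - {c1}. (\<Sum>a\<in>A. G' c a * h a) = t c"
      using Suc.IH[rule_format, OF pre] by blast
    define G where "G = (\<lambda>c a. if c = c1 then ov (s a) (w a) \<alpha> (\<alpha> + u c1) else G' c a)"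
    have g1: "\<forall>c a. G c a \<ge> 0" using G'(1) by (simp add: G_def ov_nonneg)
    have g2: "(\<Sum>c\<in>C. G c a) \<le> w a" if a: "a \<in> A" for a
    proof -
      have "(\<Sum>c\<in>C. G c a) = G c1 a + (\<Sum>c\<in>C - {c1}. G c a)" using fin c1 by (simp add: sum.remove)
      also have "(\<Sum>c\<in>C - {c1}. G c a) = (\<Sum>c\<in>C - {c1}. G' c a)" by (intro sum.cong) (auto simp: G_def)
      moreover have "(\<Sum>c\<in>C - {c1}. G' c a) \<le> w' a" using G'(2) a by blast
      ultimately show ?thesis by (simp add: G_def w'_def)
    qed
    have g3: "(\<Sum>a\<in>A. G c a) \<le> u c" if c: "c \<in> C" for c
    proof (cases "c = c1")
      case True
      have "(\<Sum>a\<in>A. G c a) = (\<Sum>a\<in>A. ov (s a) (w a) \<alpha> (\<alpha> + u c1))" using True by (simp add: G_def)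
      also have "\<dots> \<le> max 0 (\<alpha> + u c1 - \<alpha>)"
        by (rule sum_ov_le) (use sok in \<open>auto simp: src_ok_def\<close>)
      finally show ?thesis using True u1 by simp
    next
      case False thus ?thesis using G'(3) c by (simp add: G_def)
    qed
    have g4: "(\<Sum>a\<in>A. G c a * h a) = t c" if c: "c \<in> C" for c
    proof (cases "c = c1")
      case True
      have "(\<Sum>a\<in>A. G c a * h a) = (\<Sum>a\<in>A. h a * ov (s a) (w a) \<alpha> (\<alpha> + u c1))"
        using True by (simp add: G_def mult.commute)
      also have "\<dots> = \<phi> \<alpha>" unfolding \<phi>_def by (rule LB_diff[OF sok al(1), symmetric]) (use u1 in simp)
      finally show ?thesis using al(2) True by simp
    next
      case False thus ?thesis using G'(4) c by (simp add: G_def)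
    qed
    show "\<exists>G::nat\<Rightarrow>nat\<Rightarrow>real. (\<forall>c a. G c a \<ge> 0) \<and> (\<forall>a\<in>A. (\<Sum>c\<in>C. G c a) \<le> w a) \<and>
        (\<forall>c\<in>C. (\<Sum>a\<in>A. G c a) \<le> u c) \<and> (\<forall>c\<in>C. (\<Sum>a\<in>A. G c a * h a) = t c)"
      using g1 g2 g3 g4 by blast
  qed
qed

lemma core:
  assumes "tgt_ok C lt u t" "src_ok A w h s" "\<And>y. y \<ge> 0 \<Longrightarrow> LB A w h s y \<ge> LT C lt u t y"
  shows "\<exists>G::nat\<Rightarrow>nat\<Rightarrow>real. (\<forall>c a. G c a \<ge> 0) \<and> (\<forall>a\<in>A. (\<Sum>c\<in>C. G c a) \<le> w a) \<and>
        (\<forall>c\<in>C. (\<Sum>a\<in>A. G c a) \<le> u c) \<and> (\<forall>c\<in>C. (\<Sum>a\<in>A. G c a * h a) = t c)"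
  using core_n[of lt u t "card C" A h] assms by blast



lemma int_block:
  assumes s: "s \<ge> 0" and w: "w \<ge> 0" and l: "l \<ge> 0"
  shows "integral {0..l} (\<lambda>x. if s \<le> x \<and> x < s + w then h else 0) = h * ov s w 0 l \<and>
         (\<lambda>x. if s \<le> x \<and> x < s + w then h else 0) integrable_on {0..l}"
proof -
  have e: "(\<lambda>x. if s \<le> x \<and> x < s + w then h else 0) = (\<lambda>x. if x \<in> {s..<s+w} then h else 0)" by auto
  show ?thesis
  proof (cases "s \<le> l")
    case True
    have n1: "negligible {x \<in> {s..<s + w} \<inter> {0..l} - {s..min (s + w) l}. h \<noteq> 0}"
        by (rule negligible_subset[of "{}"]) auto
    have n2: "negligible {x \<in> {s..min (s + w) l} - {s..<s + w} \<inter> {0..l}. h \<noteq> 0}"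
        by (rule negligible_subset[of "{s+w}"]) (use s in auto)
    have "integral ({s..<s+w} \<inter> {0..l}) (\<lambda>x. h) = integral {s..min (s+w) l} (\<lambda>x. h)"
      by (rule integral_spike_set[OF n1 n2])
    also have "\<dots> = h * ov s w 0 l" using True s w by (simp add: ov_def max_def min_def)
    finally have i: "integral ({s..<s+w} \<inter> {0..l}) (\<lambda>x. h) = h * ov s w 0 l" .
    have "(\<lambda>x. h) integrable_on ({s..<s+w} \<inter> {0..l})"
      by (rule integrable_spike_set[OF _ n2 n1]) auto
    thus ?thesis using i unfolding e integral_restrict_Int integrable_restrict_Int by simp
  next
    case False
    hence "{s..<s+w} \<inter> {0..l} = {}" by auto
    thus ?thesis using False s unfolding e integral_restrict_Int integrable_restrict_Int by (simp add: ov_def integrable_on_empty)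
  qed
qed

definition ltB :: "real \<Rightarrow> real \<Rightarrow> (nat \<Rightarrow> ereal) \<Rightarrow> (nat \<Rightarrow> real) \<Rightarrow> nat \<Rightarrow> nat \<Rightarrow> bool" where
  "ltB k T E lam j i \<longleftrightarrow> block_height k T E lam j > block_height k T E lam i \<or>
      (block_height k T E lam j = block_height k T E lam i \<and> j < i)"

lemma bweight_fin: "E i \<noteq> \<infinity> \<Longrightarrow> bweight k T (E i) = exp (- real_of_ereal (E i) / (k * T))"
  by (simp add: bweight_def)

lemma bweight_pos: "E i \<noteq> \<infinity> \<Longrightarrow> bweight k T (E i) > 0"
  by (simp add: bweight_def)

lemma bweight_nonneg: "bweight k T e \<ge> 0"
  by (simp add: bweight_def)

lemma height_eq: "E i \<noteq> \<infinity> \<Longrightarrow> lam i / bweight k T (E i) = block_height k T E lam i"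
  by (simp add: bweight_def block_height_def exp_minus divide_inverse)

lemma height_w: "E i \<noteq> \<infinity> \<Longrightarrow> block_height k T E lam i * bweight k T (E i) = lam i"
  using height_eq[of E i lam k T] bweight_pos[of E i k T] by (simp add: field_simps)

lemma phys_tgt_ok:
  assumes st: "is_state d E lam"
  shows "tgt_ok (finite_levels d E) (ltB k T E lam) (\<lambda>i. bweight k T (E i)) lam"
proof -
  have fin: "finite (finite_levels d E)" by (simp add: finite_levels_def)
  have pos: "\<forall>c\<in>finite_levels d E. bweight k T (E c) > 0 \<and> lam c \<ge> 0"
    using st bweight_pos by (auto simp: finite_levels_def is_state_def)
  have irr: "\<forall>c\<in>finite_levels d E. \<not> ltB k T E lam c c" by (simp add: ltB_def)
  have tr: "\<forall>a\<in>finite_levels d E. \<forall>b\<in>finite_levels d E. \<forall>c\<in>finite_levels d E.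
      ltB k T E lam a b \<longrightarrow> ltB k T E lam b c \<longrightarrow> ltB k T E lam a c"
    unfolding ltB_def by auto
  have tot: "\<forall>a\<in>finite_levels d E. \<forall>b\<in>finite_levels d E. a \<noteq> b \<longrightarrow> ltB k T E lam a b \<or> ltB k T E lam b a"
    unfolding ltB_def by (metis linorder_neqE_nat linorder_neqE_linordered_idom)
  have mon: "\<forall>a\<in>finite_levels d E. \<forall>b\<in>finite_levels d E. ltB k T E lam a b \<longrightarrow>
       lam b / bweight k T (E b) \<le> lam a / bweight k T (E a)"
    using height_eq[of E _ lam k T] unfolding ltB_def finite_levels_def by auto
  show ?thesis unfolding tgt_ok_def using fin pos irr tr tot mon by blast
qed

lemma block_start_st: "block_start k T d E lam i = st (finite_levels d E) (ltB k T E lam) (\<lambda>i. bweight k T (E i)) i"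
  unfolding block_start_def st_def ltB_def by simp

lemma phys_src_ok:
  assumes st: "is_state d E lam"
  shows "src_ok (finite_levels d E) (\<lambda>i. bweight k T (E i)) (block_height k T E lam) (block_start k T d E lam)"
proof -
  note ok = phys_tgt_ok[OF st, of k T]
  have "\<forall>a\<in>finite_levels d E. block_height k T E lam a \<ge> 0"
    using st unfolding finite_levels_def is_state_def block_height_def by auto
  thus ?thesis unfolding src_ok_def block_start_st[abs_def]
    using tgt_disj[OF ok] st_nonneg[OF ok] bweight_nonneg by (auto simp: finite_levels_def)
qed

lemma gibbs_integral:
  assumes st: "is_state d E lam" and l: "l \<ge> 0"
  shows "integral {0..l} (gibbs_rescaling k T d E lam) =
      LB (finite_levels d E) (\<lambda>i. bweight k T (E i)) (block_height k T E lam) (block_start k T d E lam) l"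
    and "gibbs_rescaling k T d E lam integrable_on {0..l}"
proof -
  note sok = phys_src_ok[OF st, of k T]
  have g: "gibbs_rescaling k T d E lam = (\<lambda>x. \<Sum>i\<in>finite_levels d E.
      (if block_start k T d E lam i \<le> x \<and> x < block_start k T d E lam i + bweight k T (E i)
        then block_height k T E lam i else 0))"
    by (simp add: gibbs_rescaling_def[abs_def])
  have each: "\<And>i. i \<in> finite_levels d E \<Longrightarrow>
     integral {0..l} (\<lambda>x. if block_start k T d E lam i \<le> x \<and> x < block_start k T d E lam i + bweight k T (E i)
        then block_height k T E lam i else 0) = block_height k T E lam i * ov (block_start k T d E lam i) (bweight k T (E i)) 0 l \<and>
     (\<lambda>x. if block_start k T d E lam i \<le> x \<and> x < block_start k T d E lam i + bweight k T (E i)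
        then block_height k T E lam i else 0) integrable_on {0..l}"
    by (rule int_block) (use sok l in \<open>auto simp: src_ok_def\<close>)
  have fin: "finite (finite_levels d E)" by (simp add: finite_levels_def)
  show "gibbs_rescaling k T d E lam integrable_on {0..l}"
    unfolding g by (rule integrable_sum[OF fin]) (use each in blast)
  show "integral {0..l} (gibbs_rescaling k T d E lam) =
      LB (finite_levels d E) (\<lambda>i. bweight k T (E i)) (block_height k T E lam) (block_start k T d E lam) l"
    unfolding g LB_def
    by (subst integral_sum[OF fin]) (use each in \<open>auto intro!: sum.cong\<close>)
qed



definition Lst where "Lst k T d E lam y =
  LB (finite_levels d E) (\<lambda>i. bweight k T (E i)) (block_height k T E lam) (block_start k T d E lam) y"
definition Zst where "Zst k T d E = (\<Sum>i\<in>finite_levels d E. bweight k T (E i))"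
definition Hst where "Hst k T d E lam = (\<Sum>i\<in>finite_levels d E. block_height k T E lam i)"

lemma st_le_sum:
  assumes ok: "tgt_ok C lt u t" and c: "c \<in> C"
  shows "st C lt u c + u c \<le> sum u C"
proof -
  have fin: "finite C" using ok by (simp add: tgt_ok_def)
  have nc: "c \<notin> {x\<in>C. lt x c}" using ok c unfolding tgt_ok_def by blast
  have "st C lt u c + u c = (\<Sum>x\<in>insert c {x\<in>C. lt x c}. u x)"
    using fin nc by (simp add: st_def)
  also have "\<dots> \<le> sum u C"
    by (rule sum_mono2) (use fin c ok in \<open>auto simp: tgt_ok_def less_imp_le\<close>)
  finally show ?thesis .
qed

lemma lam_sum_fin: "is_state d E lam \<Longrightarrow> (\<Sum>i\<in>finite_levels d E. lam i) = 1"
proof -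
  assume st: "is_state d E lam"
  have "(\<Sum>i\<in>finite_levels d E. lam i) = (\<Sum>i<d. lam i)"
    by (rule sum.mono_neutral_left) (use st in \<open>auto simp: finite_levels_def is_state_def\<close>)
  thus ?thesis using st by (simp add: is_state_def)
qed

context fixes k T :: real and d :: nat and E :: "nat \<Rightarrow> ereal" and lam :: "nat \<Rightarrow> real"
  assumes st: "is_state d E lam"
begin

lemma hnn: "i \<in> finite_levels d E \<Longrightarrow> block_height k T E lam i \<ge> 0"
  using st unfolding finite_levels_def is_state_def block_height_def by auto

lemma sok: "src_ok (finite_levels d E) (\<lambda>i. bweight k T (E i)) (block_height k T E lam) (block_start k T d E lam)"
  by (rule phys_src_ok[OF st])

lemma tok: "tgt_ok (finite_levels d E) (ltB k T E lam) (\<lambda>i. bweight k T (E i)) lam"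
  by (rule phys_tgt_ok[OF st])

lemma L_nonneg: "Lst k T d E lam y \<ge> 0"
  unfolding Lst_def LB_def using hnn by (auto intro!: sum_nonneg mult_nonneg_nonneg simp: ov_nonneg)

lemma L_le_one: "Lst k T d E lam y \<le> 1"
proof -
  have "Lst k T d E lam y \<le> (\<Sum>i\<in>finite_levels d E. block_height k T E lam i * bweight k T (E i))"
    unfolding Lst_def LB_def using hnn
    by (intro sum_mono mult_left_mono ov_le_w) (auto simp: bweight_nonneg)
  also have "\<dots> = 1" using height_w lam_sum_fin[OF st] by (simp add: finite_levels_def)
  finally show ?thesis .
qed

lemma L_full: "y \<ge> Zst k T d E \<Longrightarrow> Lst k T d E lam y = 1"
proof -
  assume y: "y \<ge> Zst k T d E"
  have "Lst k T d E lam y = (\<Sum>i\<in>finite_levels d E. block_height k T E lam i * bweight k T (E i))"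
    unfolding Lst_def LB_def
  proof (intro sum.cong refl arg_cong2[where f="(*)"])
    fix i assume i: "i \<in> finite_levels d E"
    have "block_start k T d E lam i + bweight k T (E i) \<le> Zst k T d E"
      unfolding block_start_st Zst_def by (rule st_le_sum[OF tok i])
    moreover have "block_start k T d E lam i \<ge> 0" using sok i by (simp add: src_ok_def)
    moreover have "bweight k T (E i) \<ge> 0" by (rule bweight_nonneg)
    ultimately show "ov (block_start k T d E lam i) (bweight k T (E i)) 0 y = bweight k T (E i)"
      using y by (simp add: ov_def max_def min_def)
  qed
  also have "\<dots> = 1" using height_w lam_sum_fin[OF st] by (simp add: finite_levels_def)
  finally show ?thesis .
qed

lemma L_lin: "y \<ge> 0 \<Longrightarrow> Lst k T d E lam y \<le> Hst k T d E lam * y"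
proof -
  assume y: "y \<ge> 0"
  have "Lst k T d E lam y \<le> (\<Sum>i\<in>finite_levels d E. block_height k T E lam i * y)"
    unfolding Lst_def LB_def using hnn sok y
    by (intro sum_mono mult_left_mono) (auto simp: src_ok_def ov_def)
  thus ?thesis by (simp add: Hst_def sum_distrib_right)
qed

lemma L_mono: "y \<le> y' \<Longrightarrow> Lst k T d E lam y \<le> Lst k T d E lam y'"
  unfolding Lst_def LB_def using hnn
  by (intro sum_mono mult_left_mono) (auto simp: ov_def)

lemma L_cont: "continuous_on X (Lst k T d E lam)"
  unfolding Lst_def[abs_def] by (rule LB_cont)

lemma first_block: "\<exists>i0\<in>finite_levels d E. block_start k T d E lam i0 = 0 \<and> block_height k T E lam i0 > 0"
proof -
  have ne: "finite_levels d E \<noteq> {}"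
  proof
    assume "finite_levels d E = {}"
    hence "(\<Sum>i\<in>finite_levels d E. lam i) = 0" by simp
    thus False using lam_sum_fin[OF st] by simp
  qed
  obtain i0 where i0: "i0 \<in> finite_levels d E" "\<forall>c\<in>finite_levels d E. \<not> ltB k T E lam c i0"
    using exists_min[OF tok ne] by blast
  have s0: "block_start k T d E lam i0 = 0" unfolding block_start_st by (rule st_min[OF tok i0])
  obtain j where j: "j \<in> finite_levels d E" "lam j > 0"
  proof -
    have "\<exists>j\<in>finite_levels d E. lam j > 0"
    proof (rule ccontr)
      assume "\<not> ?thesis"
      hence "\<forall>j\<in>finite_levels d E. lam j \<le> 0" by auto
      hence "(\<Sum>i\<in>finite_levels d E. lam i) \<le> 0" by (intro sum_nonpos) auto
      thus False using lam_sum_fin[OF st] by simp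
    qed
    thus ?thesis using that by blast
  qed
  have hj: "block_height k T E lam j > 0"
  proof -
    have fj: "E j \<noteq> \<infinity>" using j(1) by (simp add: finite_levels_def)
    have "lam j / bweight k T (E j) > 0" using j(2) bweight_pos[of E j k T] fj by simp
    thus ?thesis using height_eq[of E j lam k T] fj by simp
  qed
  have "block_height k T E lam i0 \<ge> block_height k T E lam j"
  proof (cases "j = i0")
    case False
    from min_front(3)[OF tok i0 j(1) False] show ?thesis
      using height_eq[of E j lam k T] height_eq[of E i0 lam k T] j(1) i0(1) by (simp add: finite_levels_def)
  qed simp
  thus ?thesis using s0 hj i0 by auto
qed

lemma L_first: "\<exists>h0 w0. h0 > 0 \<and> w0 > 0 \<and> w0 \<le> Zst k T d E \<and> (\<forall>y\<ge>0. Lst k T d E lam y \<ge> h0 * min w0 y)"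
proof -
  obtain i0 where i0: "i0 \<in> finite_levels d E" "block_start k T d E lam i0 = 0" "block_height k T E lam i0 > 0"
    using first_block by blast
  let ?h = "block_height k T E lam i0" and ?w = "bweight k T (E i0)"
  have wp: "?w > 0" using i0(1) bweight_pos by (auto simp: finite_levels_def)
  have wZ: "?w \<le> Zst k T d E" unfolding Zst_def
    by (rule member_le_sum) (use i0(1) bweight_nonneg in \<open>auto simp: finite_levels_def\<close>)
  have "Lst k T d E lam y \<ge> ?h * min ?w y" if y: "y \<ge> 0" for y
  proof -
    have "?h * min ?w y = ?h * ov (block_start k T d E lam i0) ?w 0 y"
      using i0(2) wp y by (simp add: ov_def)
    also have "\<dots> \<le> Lst k T d E lam y" unfolding Lst_def LB_def
      by (rule member_le_sum) (use i0(1) hnn in \<open>auto simp: finite_levels_def ov_nonneg\<close>)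
    finally show ?thesis .
  qed
  thus ?thesis using i0(3) wp wZ by blast
qed

lemma H_pos: "Hst k T d E lam > 0"
proof -
  obtain i0 where i0: "i0 \<in> finite_levels d E" "block_start k T d E lam i0 = 0" "block_height k T E lam i0 > 0"
    using first_block by blast
  have "block_height k T E lam i0 \<le> Hst k T d E lam" unfolding Hst_def
    by (rule member_le_sum) (use i0(1) hnn in \<open>auto simp: finite_levels_def\<close>)
  thus ?thesis using i0(3) by simp
qed

lemma Z_pos: "Zst k T d E > 0"
  using L_first by force

end



lemma L_cont_scaled: "continuous_on UNIV (\<lambda>m. Lst k T d E lam (l * m))"
  unfolding Lst_def LB_def ov_def by (intro continuous_intros)

lemma mixedness:
  fixes k T \<epsilon> :: real
  assumes stR: "is_state d ER lamR" and stS: "is_state d ES lamS"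
    and e: "0 \<le> \<epsilon>" "\<epsilon> < 1"
  defines "M \<equiv> rel_mixedness (\<lambda>x. gibbs_rescaling k T d ER lamR x / (1 - \<epsilon>)) (gibbs_rescaling k T d ES lamS)"
  shows "M > 0 \<and> (\<forall>l\<ge>0. (1 - \<epsilon>) * Lst k T d ES lamS (l * M) \<le> Lst k T d ER lamR l)"
proof -
  let ?LR = "Lst k T d ER lamR" and ?LS = "Lst k T d ES lamS"
  have e1: "1 - \<epsilon> > 0" using e by simp
  have intf: "integral {0..l} (\<lambda>x. gibbs_rescaling k T d ER lamR x / (1 - \<epsilon>)) = ?LR l / (1 - \<epsilon>)"
    if "l \<ge> 0" for l
  proof -
    have "(\<lambda>x. gibbs_rescaling k T d ER lamR x / (1 - \<epsilon>)) = (\<lambda>x. gibbs_rescaling k T d ER lamR x * inverse (1 - \<epsilon>))"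
      by (simp add: divide_inverse)
    thus ?thesis using gibbs_integral(1)[OF stR that, of k T] by (simp add: Lst_def divide_inverse)
  qed
  have intg: "integral {0..y} (gibbs_rescaling k T d ES lamS) = ?LS y" if "y \<ge> 0" for y
    using gibbs_integral(1)[OF stS that, of k T] by (simp add: Lst_def)
  have intR: "integral {0..y} (gibbs_rescaling k T d ER lamR) = ?LR y" if "y \<ge> 0" for y
    using gibbs_integral(1)[OF stR that, of k T] by (simp add: Lst_def)
  define Q where "Q = (\<lambda>m::real. m > 0 \<and> (\<forall>l\<ge>0. ?LS (l * m) \<le> ?LR l / (1 - \<epsilon>)))"
  have PQ: "(\<lambda>m. m > 0 \<and> (\<forall>l\<ge>0. integral {0..l} (\<lambda>x. gibbs_rescaling k T d ER lamR x / (1 - \<epsilon>))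
        \<ge> integral {0..l * m} (gibbs_rescaling k T d ES lamS))) = Q"
    unfolding Q_def
    by (intro ext) (auto simp: intf intg intR)
  have Mdef: "M = (GREATEST m. Q m)" unfolding M_def rel_mixedness_def PQ ..
  obtain h0 w0 where hw: "h0 > 0" "w0 > 0" "w0 \<le> Zst k T d ER" "\<forall>y\<ge>0. ?LR y \<ge> h0 * min w0 y"
    using L_first[OF stR] by blast
  define ZR where "ZR = Zst k T d ER"
  define HS where "HS = Hst k T d ES lamS"
  have ZRp: "ZR > 0" using Z_pos[OF stR] by (simp add: ZR_def)
  have HSp: "HS > 0" using H_pos[OF stS] by (simp add: HS_def)
  define m0 where "m0 = h0 * w0 / (ZR * HS)"
  have m0p: "m0 > 0" using hw ZRp HSp by (simp add: m0_def)
  have Qm0: "Q m0"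
    unfolding Q_def
  proof (intro conjI allI impI m0p)
    fix l :: real assume l: "l \<ge> 0"
    have a: "?LR l \<le> ?LR l / (1 - \<epsilon>)"
    proof -
      have "?LR l * (1 - \<epsilon>) \<le> ?LR l * 1"
        by (rule mult_left_mono) (use L_nonneg[OF stR, of k T l] e in auto)
      thus ?thesis using e1 by (simp add: le_divide_eq)
    qed
    have "?LS (l * m0) \<le> ?LR l"
    proof (cases "l \<ge> ZR")
      case True
      thus ?thesis using L_full[OF stR] L_le_one[OF stS] by (simp add: ZR_def)
    next
      case False
      have "?LS (l * m0) \<le> HS * (l * m0)" using L_lin[OF stS, of "l * m0"] l m0p by (simp add: HS_def)
      also have "\<dots> = h0 * (w0 * l / ZR)" using HSp ZRp by (simp add: m0_def field_simps)
      also have "\<dots> \<le> h0 * min w0 l"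
      proof (intro mult_left_mono)
        have "w0 * l / ZR \<le> w0" using False hw(2) ZRp by (simp add: divide_le_eq mult_left_mono)
        moreover have "w0 * l / ZR \<le> l" using hw(3) l ZRp mult_left_mono[OF hw(3) l] by (simp add: divide_le_eq ZR_def mult.commute)
        ultimately show "w0 * l / ZR \<le> min w0 l" by simp
      qed (use hw in simp)
      also have "\<dots> \<le> ?LR l" using hw(4) l by simp
      finally show ?thesis .
    qed
    thus "?LS (l * m0) \<le> ?LR l / (1 - \<epsilon>)" using a by simp
  qed
  define B where "B = Hst k T d ER lamR * Zst k T d ES / (1 - \<epsilon>)"
  have bnd: "m \<le> B" if Qm: "Q m" for m
  proof -
    have mp: "m > 0" using Qm by (simp add: Q_def)
    let ?l = "Zst k T d ES / m"
    have lnn: "?l \<ge> 0" using Z_pos[OF stS, of k T] mp by simp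
    have "?LS (?l * m) = 1" using mp L_full[OF stS] by simp
    hence "1 \<le> ?LR ?l / (1 - \<epsilon>)" using Qm lnn by (auto simp: Q_def)
    hence "1 - \<epsilon> \<le> ?LR ?l" using e1 by (simp add: le_divide_eq)
    also have "\<dots> \<le> Hst k T d ER lamR * ?l" by (rule L_lin[OF stR lnn])
    finally have "(1 - \<epsilon>) * m \<le> Hst k T d ER lamR * Zst k T d ES" using mp by (simp add: le_divide_eq)
    thus ?thesis using e1 by (simp add: B_def le_divide_eq mult.commute)
  qed
  define A where "A = {m. Q m \<and> m \<ge> m0}"
  define C where "C = {m0..} \<inter> (\<Inter>l\<in>{0..}. {m. ?LS (l * m) \<le> ?LR l / (1 - \<epsilon>)})"
  have clC: "closed C" unfolding C_def
    by (intro closed_Int closed_atLeast closed_INT ballI closed_Collect_le L_cont_scaled continuous_on_const)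
  have AC: "A \<subseteq> C" unfolding A_def C_def Q_def by auto
  have Ane: "A \<noteq> {}" using Qm0 unfolding A_def by auto
  have Abdd: "bdd_above A" unfolding A_def bdd_above_def using bnd by blast
  define M0 where "M0 = Sup A"
  have M0C: "M0 \<in> C" unfolding M0_def by (rule closed_subset_contains_Sup[OF clC AC Ane Abdd])
  have QM0: "Q M0" using M0C m0p unfolding C_def Q_def by auto
  have grt: "m \<le> M0" if "Q m" for m
  proof (cases "m \<ge> m0")
    case True
    hence "m \<in> A" using that by (simp add: A_def)
    thus ?thesis unfolding M0_def using Abdd by (rule cSup_upper)
  next
    case False
    thus ?thesis using M0C unfolding C_def by auto
  qed
  have "M = M0" unfolding Mdef by (rule Greatest_equality[of Q M0, OF QM0 grt])
  thus ?thesis using QM0 e1 unfolding Q_def by (auto simp: le_divide_eq mult.commute)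
qed



definition PE :: "nat \<Rightarrow> step list \<Rightarrow> nat \<Rightarrow> (nat list \<Rightarrow> bool) \<Rightarrow> real" where
  "PE d ss j Q = (\<Sum>ls\<in>paths d (length ss). if Q ls then path_prob ss j ls else 0)"

lemma paths_0: "paths d 0 = {[]}" by (auto simp: paths_def)

lemma paths_Suc: "paths d (Suc m) = (\<lambda>(i, ls). i # ls) ` ({..<d} \<times> paths d m)"
proof (intro equalityI subsetI)
  fix x assume "x \<in> paths d (Suc m)"
  then obtain i ls where "x = i # ls" "i < d" "ls \<in> paths d m"
    by (cases x) (auto simp: paths_def)
  thus "x \<in> (\<lambda>(i, ls). i # ls) ` ({..<d} \<times> paths d m)" by force
qed (auto simp: paths_def)

lemma finite_paths: "finite (paths d m)"
  by (induction m) (auto simp: paths_0 paths_Suc)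

lemma sum_paths_Suc: "(\<Sum>ls\<in>paths d (Suc m). f ls) = (\<Sum>i<d. \<Sum>ls\<in>paths d m. f (i # ls))"
proof -
  have inj: "inj_on (\<lambda>(i, ls). i # ls) ({..<d} \<times> paths d m)" by (auto simp: inj_on_def)
  have "(\<Sum>ls\<in>paths d (Suc m). f ls) = (\<Sum>x\<in>{..<d} \<times> paths d m. f (fst x # snd x))"
    unfolding paths_Suc by (subst sum.reindex[OF inj]) (auto intro!: sum.cong simp: case_prod_beta)
  also have "\<dots> = (\<Sum>i<d. \<Sum>ls\<in>paths d m. f (i # ls))"
    unfolding sum.cartesian_product by (simp add: case_prod_beta)
  finally show ?thesis .
qed

lemma prob_event_PE: "prob_event d lam ss P = (\<Sum>j<d. lam j * PE d ss j (P j))"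
  unfolding prob_event_def PE_def by (auto simp: sum_distrib_left intro!: sum.cong)

lemma PE_Nil: "PE d [] j Q = (if Q [] then 1 else 0)"
  by (simp add: PE_def paths_0)

lemma PE_Cons: "PE d (s # ss) j Q = (\<Sum>i<d. step_factor s j i * PE d ss i (\<lambda>ls. Q (i # ls)))"
  unfolding PE_def by (simp add: sum_paths_Suc sum_distrib_left if_distrib cong: if_cong)

lemma sum_delta_lt: "j < (d::nat) \<Longrightarrow> (\<Sum>i<d. (if i = j then 1 else 0) * f i) = (f j :: real)"
proof -
  assume "j < d"
  have "(\<Sum>i<d. (if i = j then 1 else 0) * f i) = (\<Sum>i<d. if i = j then f i else 0)"
    by (intro sum.cong) auto
  also have "\<dots> = f j" using \<open>j < d\<close> by (subst sum.delta) auto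
  finally show ?thesis .
qed

lemma PE_Change: "j < d \<Longrightarrow> PE d (Change S F # ss) j Q = PE d ss j (\<lambda>ls. Q (j # ls))"
  unfolding PE_Cons by (simp add: sum_delta_lt[where f="\<lambda>i. PE d ss i (\<lambda>ls. Q (i # ls))"])

lemma PE_strategy:
  assumes j: "j < d" and sw: "\<And>i. i < d \<Longrightarrow> sw i < d"
  shows "PE d [Change S1 F1, Therm B, Change S3 F3, Change S4 F4, Therm (\<lambda>i' i. if i' = sw i then 1 else 0), Change S6 F6] j Q
    = (\<Sum>i<d. B i j * (if Q [j, i, i, i, sw i, sw i] then 1 else 0))"
proof -
  have "PE d [Change S1 F1, Therm B, Change S3 F3, Change S4 F4, Therm (\<lambda>i' i. if i' = sw i then 1 else 0), Change S6 F6] j Q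
    = (\<Sum>i<d. B i j * PE d [Change S3 F3, Change S4 F4, Therm (\<lambda>i' i. if i' = sw i then 1 else 0), Change S6 F6] i (\<lambda>ls. Q (j # i # ls)))"
    by (subst PE_Change[OF j], subst PE_Cons, simp only: step_factor.simps)
  also have "\<dots> = (\<Sum>i<d. B i j * (if Q [j, i, i, i, sw i, sw i] then 1 else 0))"
  proof (intro sum.cong refl arg_cong2[where f="(*)"])
    fix i assume "i \<in> {..<d}"
    hence i: "i < d" by simp
    have "PE d [Change S3 F3, Change S4 F4, Therm (\<lambda>i' i. if i' = sw i then 1 else 0), Change S6 F6] i (\<lambda>ls. Q (j # i # ls))
       = (\<Sum>i'<d. (if i' = sw i then 1 else 0) * PE d [Change S6 F6] i' (\<lambda>ls. Q (j # i # i # i # i' # ls)))"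
      by (subst PE_Change[OF i], subst PE_Change[OF i], subst PE_Cons, simp only: step_factor.simps)
    also have "\<dots> = PE d [Change S6 F6] (sw i) (\<lambda>ls. Q (j # i # i # i # sw i # ls))"
      by (rule sum_delta_lt[OF sw[OF i]])
    also have "\<dots> = (if Q [j, i, i, i, sw i, sw i] then 1 else 0)"
      by (subst PE_Change[OF sw[OF i]], simp only: PE_Nil)
    finally show "PE d [Change S3 F3, Change S4 F4, Therm (\<lambda>i' i. if i' = sw i then 1 else 0), Change S6 F6] i (\<lambda>ls. Q (j # i # ls)) =
      (if Q [j, i, i, i, sw i, sw i] then 1 else 0)" .
  qed
  finally show ?thesis .
qed



lemma sum_if2:
  assumes DD: "DD \<subseteq> {..<d::nat}" and j: "j < d" "j \<notin> DD"
  shows "(\<Sum>i<d. if i \<in> DD then f i else if i = j then c else 0) = sum f DD + (c::real)"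
proof -
  have "(\<Sum>i<d. if i \<in> DD then f i else if i = j then c else 0) =
        (\<Sum>i\<in>{..<d} \<inter> {x. x \<in> DD}. f i) + (\<Sum>i\<in>{..<d} \<inter> - {x. x \<in> DD}. if i = j then c else 0)"
    by (rule sum.If_cases) simp
  also have "{..<d} \<inter> {x. x \<in> DD} = DD" using DD by auto
  also have "{..<d} \<inter> - {x. x \<in> DD} = {..<d} - DD" by auto
  also have "(\<Sum>i\<in>{..<d} - DD. if i = j then c else 0) = c" using j by (subst sum.delta) auto
  finally show ?thesis .
qed

definition Bmat :: "nat set \<Rightarrow> nat set \<Rightarrow> (nat \<Rightarrow> real) \<Rightarrow> (nat \<Rightarrow> real) \<Rightarrow> (nat \<Rightarrow> nat \<Rightarrow> real) \<Rightarrow> nat \<Rightarrow> nat \<Rightarrow> real" where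
  "Bmat AA DD wA uD G' i j =
    (if j \<in> AA then (if i \<in> DD then G' i j / wA j else if i = j then 1 - (\<Sum>i'\<in>DD. G' i' j) / wA j else 0)
     else if j \<in> DD then (if i \<in> AA then G' j i / uD j else if i = j then 1 - (\<Sum>a\<in>AA. G' j a) / uD j else 0)
     else (if i = j then 1 else 0))"

lemma Bmat_valid:
  assumes AA: "AA \<subseteq> {..<d}" and DD: "DD \<subseteq> {..<d}" and disj: "AA \<inter> DD = {}"
    and wA: "\<And>a. a \<in> AA \<Longrightarrow> wA a > 0" and uD: "\<And>i. i \<in> DD \<Longrightarrow> uD i > 0"
    and G0: "\<And>i a. G' i a \<ge> 0"
    and Gw: "\<And>a. a \<in> AA \<Longrightarrow> (\<Sum>i\<in>DD. G' i a) \<le> wA a"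
    and Gu: "\<And>i. i \<in> DD \<Longrightarrow> (\<Sum>a\<in>AA. G' i a) \<le> uD i"
    and bwA: "\<And>a. a \<in> AA \<Longrightarrow> bweight k T (E1 a) = wA a"
    and bwD: "\<And>i. i \<in> DD \<Longrightarrow> bweight k T (E1 i) = uD i"
  shows "valid_step k T d E1 (Therm (Bmat AA DD wA uD G'))"
proof -
  let ?B = "Bmat AA DD wA uD G'"
  have finAR: "finite AA" and finD: "finite DD" using AA DD finite_subset by blast+
  have nn: "0 \<le> ?B i j" for i j
  proof -
    have "j \<in> AA \<Longrightarrow> (\<Sum>i'\<in>DD. G' i' j) / wA j \<le> 1" using Gw wA by (simp add: divide_le_eq)
    moreover have "j \<in> DD \<Longrightarrow> (\<Sum>a\<in>AA. G' j a) / uD j \<le> 1" using Gu uD by (simp add: divide_le_eq)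
    ultimately show ?thesis using G0 wA uD unfolding Bmat_def by (auto intro!: divide_nonneg_pos)
  qed
  have col: "(\<Sum>i<d. ?B i j) = 1" if j: "j < d" for j
  proof (cases "j \<in> AA")
    case True
    hence jD: "j \<notin> DD" using disj by auto
    have "(\<Sum>i<d. ?B i j) = (\<Sum>i<d. if i \<in> DD then G' i j / wA j else if i = j then 1 - (\<Sum>i'\<in>DD. G' i' j) / wA j else 0)"
      unfolding Bmat_def using True by simp
    also have "\<dots> = (\<Sum>i\<in>DD. G' i j / wA j) + (1 - (\<Sum>i'\<in>DD. G' i' j) / wA j)"
      by (rule sum_if2[OF DD j jD])
    finally show ?thesis by (simp add: sum_divide_distrib)
  next
    case False
    show ?thesis
    proof (cases "j \<in> DD")
      case True
      hence jA: "j \<notin> AA" using disj by auto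
      have "(\<Sum>i<d. ?B i j) = (\<Sum>i<d. if i \<in> AA then G' j i / uD j else if i = j then 1 - (\<Sum>a\<in>AA. G' j a) / uD j else 0)"
        unfolding Bmat_def using True False by simp
      also have "\<dots> = (\<Sum>i\<in>AA. G' j i / uD j) + (1 - (\<Sum>a\<in>AA. G' j a) / uD j)"
        by (rule sum_if2[OF AA j jA])
      finally show ?thesis by (simp add: sum_divide_distrib)
    next
      case F2: False
      have "(\<Sum>i<d. ?B i j) = (\<Sum>i<d. if i = j then 1 else 0)"
        unfolding Bmat_def using False F2 by simp
      also have "\<dots> = 1" using j by (subst sum.delta) auto
      finally show ?thesis .
    qed
  qed
  let ?bw = "\<lambda>j. bweight k T (E1 j)"
  have row: "(\<Sum>j<d. ?B i j * ?bw j) = ?bw i" if i: "i < d" for i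
  proof (cases "i \<in> DD")
    case True
    hence iA: "i \<notin> AA" using disj by auto
    have "(\<Sum>j<d. ?B i j * ?bw j) = (\<Sum>j<d. if j \<in> AA then G' i j else if j = i then uD i - (\<Sum>a\<in>AA. G' i a) else 0)"
    proof (intro sum.cong refl)
      fix j assume "j \<in> {..<d}"
      show "?B i j * ?bw j = (if j \<in> AA then G' i j else if j = i then uD i - (\<Sum>a\<in>AA. G' i a) else 0)"
        unfolding Bmat_def using True iA bwA bwD wA uD disj
        by (auto simp: field_simps dest: less_imp_neq[OF wA] less_imp_neq[OF uD])
    qed
    also have "\<dots> = sum (G' i) AA + (uD i - (\<Sum>a\<in>AA. G' i a))" by (rule sum_if2[OF AA i iA])
    finally show ?thesis using bwD[OF True] by simp
  next
    case False
    show ?thesis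
    proof (cases "i \<in> AA")
      case True
      have "(\<Sum>j<d. ?B i j * ?bw j) = (\<Sum>j<d. if j \<in> DD then G' j i else if j = i then wA i - (\<Sum>i'\<in>DD. G' i' i) else 0)"
      proof (intro sum.cong refl)
        fix j assume "j \<in> {..<d}"
        show "?B i j * ?bw j = (if j \<in> DD then G' j i else if j = i then wA i - (\<Sum>i'\<in>DD. G' i' i) else 0)"
          unfolding Bmat_def using True False bwA bwD wA uD disj
          by (auto simp: field_simps dest: less_imp_neq[OF wA] less_imp_neq[OF uD])
      qed
      also have "\<dots> = (\<Sum>j\<in>DD. G' j i) + (wA i - (\<Sum>i'\<in>DD. G' i' i))" by (rule sum_if2[OF DD i False])
      finally show ?thesis using bwA[OF True] by simp
    next
      case F2: False
      have "(\<Sum>j<d. ?B i j * ?bw j) = (\<Sum>j<d. if j = i then ?bw i else 0)"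
        by (intro sum.cong refl) (use False F2 in \<open>auto simp: Bmat_def\<close>)
      also have "\<dots> = ?bw i" using i by (subst sum.delta) auto
      finally show ?thesis .
    qed
  qed
  have gibbs: "(\<Sum>j<d. ?B i j * gibbs_vec k T d E1 j) = gibbs_vec k T d E1 i" if i: "i < d" for i
    unfolding gibbs_vec_def using row[OF i]
    by (simp add: sum_divide_distrib[symmetric] mult.assoc[symmetric] times_divide_eq_right)
  show ?thesis using nn col gibbs by simp
qed

lemma perm_valid:
  assumes sw: "\<And>i. i < d \<Longrightarrow> sw i < d" "\<And>i. i < d \<Longrightarrow> sw (sw i) = i"
    and E: "\<And>i. i < d \<Longrightarrow> E (sw i) = E i"
  shows "valid_step k T d E (Therm (\<lambda>i' i. if i' = sw i then 1 else 0))"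
proof -
  have col: "(\<Sum>i<d. (if i = sw j then 1 else 0)) = (1::real)" if "j < d" for j
    using sw(1)[OF that] by (subst sum.delta) auto
  have row: "(\<Sum>j<d. (if i = sw j then 1 else 0) * gibbs_vec k T d E j) = gibbs_vec k T d E i" if i: "i < d" for i
  proof -
    have "(\<Sum>j<d. (if i = sw j then 1 else 0) * gibbs_vec k T d E j) = (\<Sum>j<d. if j = sw i then gibbs_vec k T d E j else 0)"
      by (intro sum.cong refl) (use sw i in auto)
    also have "\<dots> = gibbs_vec k T d E (sw i)" using sw(1)[OF i] by (subst sum.delta) auto
    also have "\<dots> = gibbs_vec k T d E i" using E[OF i] by (simp add: gibbs_vec_def)
    finally show ?thesis .
  qed
  show ?thesis using col row by simp
qed



locale strat =
  fixes k T \<epsilon> :: real and d :: nat and ER ES :: "nat \<Rightarrow> ereal" and lamR lamS :: "nat \<Rightarrow> real"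
    and M :: real and AR IR CS X DD :: "nat set" and \<kappa> :: "nat \<Rightarrow> nat" and G :: "nat \<Rightarrow> nat \<Rightarrow> real"
  assumes kpos: "k > 0" and Tpos: "T > 0"
    and stR: "is_state d ER lamR" and stS: "is_state d ES lamS"
    and e0: "0 \<le> \<epsilon>" and e1: "\<epsilon> < 1" and Mpos: "M > 0"
    and AR_def: "AR = finite_levels d ER" and IR_def: "IR = {i. i < d \<and> ER i = \<infinity>}"
    and CS_def: "CS = finite_levels d ES"
    and Xsub: "X \<subseteq> IR - CS" and kap: "bij_betw \<kappa> X (CS \<inter> AR)"
    and DD_def: "DD = (CS \<inter> IR) \<union> X"
    and G0: "\<And>c a. G c a \<ge> 0"
    and Gw: "\<And>a. a \<in> AR \<Longrightarrow> (\<Sum>c\<in>CS. G c a) \<le> bweight k T (ER a)"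
    and Gu: "\<And>c. c \<in> CS \<Longrightarrow> (\<Sum>a\<in>AR. G c a) \<le> bweight k T (ES c) / M"
    and Gt: "\<And>c. c \<in> CS \<Longrightarrow> (\<Sum>a\<in>AR. G c a * block_height k T ER lamR a) = (1 - \<epsilon>) * lamS c"
begin

definition "tau i = (if i \<in> X then \<kappa> i else i)"
definition "sw i = (if i \<in> X then \<kappa> i else if i \<in> CS \<inter> AR then inv_into X \<kappa> i else i)"
definition "W = k * T * ln M"
definition "F1 i = ES (tau i) + ereal W"
definition "wA a = bweight k T (ER a)"
definition "uD i = bweight k T (ES (tau i)) / M"
definition "Bm = Bmat AR DD wA uD (\<lambda>i a. G (tau i) a)"
definition "Pm = (\<lambda>i' i. if i' = sw i then 1 else (0::real))"
definition "ss = [Change DD F1, Therm Bm, Change AR (\<lambda>_. \<infinity>), Change (CS \<inter> AR) (\<lambda>i. ES i + ereal W),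
                  Therm Pm, Change (X \<union> CS) (\<lambda>i. if i \<in> CS then ES i else \<infinity>)]"

definition "E1 = apply_step ER (Change DD F1)"
definition "E3 = apply_step E1 (Change AR (\<lambda>_. \<infinity>))"
definition "E4 = apply_step E3 (Change (CS \<inter> AR) (\<lambda>i. ES i + ereal W))"

lemma AR_sub: "AR \<subseteq> {..<d}" and CS_sub: "CS \<subseteq> {..<d}" and IR_sub: "IR \<subseteq> {..<d}"
  by (auto simp: AR_def CS_def IR_def finite_levels_def)

lemma X_sub: "X \<subseteq> {..<d}" using Xsub IR_sub by auto

lemma DD_sub: "DD \<subseteq> {..<d}" using X_sub CS_sub by (auto simp: DD_def)

lemma AR_IR: "i < d \<Longrightarrow> i \<in> AR \<longleftrightarrow> i \<notin> IR" by (auto simp: AR_def IR_def finite_levels_def)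

lemma AR_DD: "AR \<inter> DD = {}" using Xsub by (auto simp: DD_def AR_def IR_def finite_levels_def)

lemma X_CS: "X \<inter> CS = {}" using Xsub by auto

lemma kap_in: "i \<in> X \<Longrightarrow> \<kappa> i \<in> CS \<inter> AR" using kap by (auto simp: bij_betw_def)

lemma kinv_in: "c \<in> CS \<inter> AR \<Longrightarrow> inv_into X \<kappa> c \<in> X"
  using kap by (metis bij_betw_def inv_into_into)

lemma kinv1: "c \<in> CS \<inter> AR \<Longrightarrow> \<kappa> (inv_into X \<kappa> c) = c"
  using kap by (metis bij_betw_def f_inv_into_f)

lemma kinv2: "i \<in> X \<Longrightarrow> inv_into X \<kappa> (\<kappa> i) = i"
  using kap by (metis bij_betw_def inv_into_f_f)

lemma X_AR: "X \<inter> AR = {}" using Xsub AR_IR IR_sub by auto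

lemma tau_bij: "bij_betw tau DD CS"
proof -
  have "bij_betw tau (CS \<inter> IR) (CS \<inter> IR)" by (auto simp: bij_betw_def inj_on_def tau_def) (use Xsub in auto)
  moreover have "bij_betw tau X (CS \<inter> AR)"
    by (rule bij_betw_cong[THEN iffD1, OF _ kap]) (simp add: tau_def)
  moreover have "(CS \<inter> IR) \<inter> X = {}" using Xsub by auto
  moreover have "(CS \<inter> IR) \<inter> (CS \<inter> AR) = {}" using AR_IR IR_sub by auto
  ultimately have "bij_betw tau ((CS \<inter> IR) \<union> X) ((CS \<inter> IR) \<union> (CS \<inter> AR))"
    by (intro bij_betw_combine) auto
  moreover have "(CS \<inter> IR) \<union> (CS \<inter> AR) = CS" using AR_IR CS_sub by auto
  ultimately show ?thesis by (simp add: DD_def)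
qed

lemma tau_in: "i \<in> DD \<Longrightarrow> tau i \<in> CS" using tau_bij by (auto simp: bij_betw_def)

lemma sw_tau: "i \<in> DD \<Longrightarrow> sw i = tau i"
  using AR_IR IR_sub by (auto simp: sw_def tau_def DD_def)

lemma sw_lt: "i < d \<Longrightarrow> sw i < d"
  using kap_in kinv_in X_sub CS_sub by (auto simp: sw_def)

lemma sw_sw: "i < d \<Longrightarrow> sw (sw i) = i"
  using kap_in kinv_in kinv1 kinv2 X_AR X_CS by (auto simp: sw_def)

lemma ES_fin: "c \<in> CS \<Longrightarrow> \<exists>r. ES c = ereal r"
  using stS by (cases "ES c") (auto simp: CS_def finite_levels_def is_state_def)

lemma ES_notinf: "i < d \<Longrightarrow> i \<notin> CS \<Longrightarrow> ES i = \<infinity>"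
  by (auto simp: CS_def finite_levels_def)

lemma ER_fin: "a \<in> AR \<Longrightarrow> \<exists>r. ER a = ereal r"
  using stR by (cases "ER a") (auto simp: AR_def finite_levels_def is_state_def)

lemma E1_eq: "E1 i = (if i \<in> DD then F1 i else ER i)" by (simp add: E1_def)
lemma E3_eq: "E3 i = (if i \<in> AR then \<infinity> else E1 i)" by (simp add: E3_def)
lemma E4_eq: "E4 i = (if i \<in> CS \<inter> AR then ES i + ereal W else E3 i)" by (simp add: E4_def)

lemma E4_sw: "i < d \<Longrightarrow> E4 (sw i) = E4 i"
proof -
  assume i: "i < d"
  show ?thesis
  proof (cases "i \<in> X")
    case True
    have "\<kappa> i \<in> CS \<inter> AR" by (rule kap_in[OF True])
    moreover have "i \<notin> AR" "i \<notin> CS" "i \<in> DD" using True X_AR X_CS by (auto simp: DD_def)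
    ultimately show ?thesis using True by (simp add: sw_def E4_eq E3_eq E1_eq F1_def tau_def)
  next
    case False
    show ?thesis
    proof (cases "i \<in> CS \<inter> AR")
      case True
      have x: "inv_into X \<kappa> i \<in> X" by (rule kinv_in[OF True])
      hence "inv_into X \<kappa> i \<notin> AR" "inv_into X \<kappa> i \<notin> CS" "inv_into X \<kappa> i \<in> DD" using X_AR X_CS by (auto simp: DD_def)
      thus ?thesis using True False x kinv1[OF True]
        by (simp add: sw_def E4_eq E3_eq E1_eq F1_def tau_def)
    next
      case F2: False
      hence "sw i = i" using False by (auto simp: sw_def)
      thus ?thesis by simp
    qed
  qed
qed

lemma bweight_shift: "bweight k T (ereal (r + W)) = bweight k T (ereal r) / M"
proof -
  have "- (r + k * T * ln M) / (k * T) = - r / (k * T) - ln M" using kpos Tpos by (simp add: field_simps)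
  hence "exp (- (r + k * T * ln M) / (k * T)) = exp (- r / (k * T)) / M"
    using Mpos by (simp add: exp_diff)
  thus ?thesis by (simp add: bweight_def W_def)
qed

lemma v2: "valid_step k T d E1 (Therm Bm)"
  unfolding Bm_def
proof (rule Bmat_valid[OF AR_sub DD_sub AR_DD])
  show "wA a > 0" if "a \<in> AR" for a using that bweight_pos by (auto simp: wA_def AR_def finite_levels_def)
  show "uD i > 0" if ii: "i \<in> DD" for i
  proof -
    obtain r where "ES (tau i) = ereal r" using ES_fin[OF tau_in[OF ii]] by blast
    thus ?thesis using Mpos by (simp add: uD_def bweight_def)
  qed
  show "\<And>i a. 0 \<le> G (tau i) a" using G0 by simp
  show "(\<Sum>i\<in>DD. G (tau i) a) \<le> wA a" if "a \<in> AR" for a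
    using Gw[OF that] sum.reindex_bij_betw[OF tau_bij, of "\<lambda>c. G c a"] by (simp add: wA_def)
  show "(\<Sum>a\<in>AR. G (tau i) a) \<le> uD i" if "i \<in> DD" for i
    using Gu[OF tau_in[OF that]] by (simp add: uD_def)
  show "bweight k T (E1 a) = wA a" if "a \<in> AR" for a
    using that AR_DD by (auto simp: E1_eq wA_def)
  show "bweight k T (E1 i) = uD i" if ii: "i \<in> DD" for i
  proof -
    obtain r where r: "ES (tau i) = ereal r" using ES_fin[OF tau_in[OF ii]] by blast
    show ?thesis using ii by (simp add: E1_eq F1_def r bweight_shift uD_def)
  qed
qed

lemma valid: "valid_strategy k T d ER ss"
proof -
  have v1: "valid_step k T d ER (Change DD F1)"
  proof -
    have "F1 i \<noteq> - \<infinity>" if "i \<in> DD" for i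
      using ES_fin[OF tau_in[OF that]] by (auto simp: F1_def)
    thus ?thesis using DD_sub by simp
  qed
  have v3: "valid_step k T d E1 (Change AR (\<lambda>_. \<infinity>))" using AR_sub by simp
  have v4: "valid_step k T d E3 (Change (CS \<inter> AR) (\<lambda>i. ES i + ereal W))"
    using CS_sub ES_fin by fastforce
  have v5: "valid_step k T d E4 (Therm Pm)"
    unfolding Pm_def by (rule perm_valid[of d sw E4, OF sw_lt sw_sw E4_sw])
  have v6: "valid_step k T d E4 (Change (X \<union> CS) (\<lambda>i. if i \<in> CS then ES i else \<infinity>))"
    using X_sub CS_sub ES_fin by fastforce
  show ?thesis unfolding ss_def
    by (simp only: valid_strategy.simps apply_step.simps(1) E1_def[symmetric] E3_def[symmetric] E4_def[symmetric])
       (use v1 v2 v3 v4 v5 v6 in simp)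
qed

lemma final: "i < d \<Longrightarrow> final_energies ER ss i = ES i"
proof -
  assume i: "i < d"
  have "final_energies ER ss = apply_step E4 (Change (X \<union> CS) (\<lambda>i. if i \<in> CS then ES i else \<infinity>))"
    unfolding final_energies_def ss_def
    by (simp only: foldl.simps apply_step.simps(1) E1_def[symmetric] E3_def[symmetric] E4_def[symmetric])
  hence f: "final_energies ER ss i = (if i \<in> X \<union> CS then (if i \<in> CS then ES i else \<infinity>) else E4 i)" by simp
  show ?thesis
  proof (cases "i \<in> X \<union> CS")
    case True thus ?thesis using f X_CS ES_notinf[OF i] by auto
  next
    case False
    hence "i \<notin> CS" "i \<notin> X" by auto
    moreover have "i \<notin> DD" using False by (auto simp: DD_def)
    moreover have "i \<notin> AR \<Longrightarrow> ER i = \<infinity>" using i by (auto simp: AR_def finite_levels_def)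
    ultimately show ?thesis using f ES_notinf[OF i] by (auto simp: E4_eq E3_eq E1_eq)
  qed
qed

lemma works: "path_works ER ss j [j, i, i, i, sw i, sw i] =
   [step_work ER (Change DD F1) j, 0, step_work E1 (Change AR (\<lambda>_. \<infinity>)) i,
    step_work E3 (Change (CS \<inter> AR) (\<lambda>i. ES i + ereal W)) i, 0,
    step_work E4 (Change (X \<union> CS) (\<lambda>i. if i \<in> CS then ES i else \<infinity>)) (sw i)]"
  unfolding ss_def
  by (simp only: path_works.simps apply_step.simps(1) step_work.simps(1) E1_def[symmetric] E3_def[symmetric] E4_def[symmetric])

lemma K1: assumes j: "j \<in> AR" and i: "i \<in> DD" shows "total_work ER ss j [j, i, i, i, sw i, sw i] = ereal W"
proof -
  have jD: "j \<notin> DD" using j AR_DD by auto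
  have iA: "i \<notin> AR" using i AR_DD by auto
  have st: "sw i = tau i" "tau i \<in> CS" using sw_tau[OF i] tau_in[OF i] by auto
  obtain r where r: "ES (tau i) = ereal r" using ES_fin[OF st(2)] by blast
  have E4t: "E4 (tau i) = ES (tau i) + ereal W"
  proof (cases "i \<in> X")
    case True
    thus ?thesis using kap_in[OF True] by (simp add: tau_def E4_eq)
  next
    case False
    hence "tau i = i" by (simp add: tau_def)
    thus ?thesis using i iA by (simp add: E4_eq E3_eq E1_eq F1_def)
  qed
  have "path_works ER ss j [j, i, i, i, sw i, sw i] = [0, 0, 0, 0, 0, ereal W]"
    unfolding works using jD iA st E4t r by simp
  thus ?thesis by (simp add: total_work_def)
qed

lemma K2: assumes i: "i \<in> AR" shows "total_work ER ss j [j, i, i, i, sw i, sw i] = - \<infinity>"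
proof -
  have iD: "i \<notin> DD" using i AR_DD by auto
  obtain r where r: "ER i = ereal r" using ER_fin[OF i] by blast
  have "step_work E1 (Change AR (\<lambda>_. \<infinity>)) i = - \<infinity>" using i iD r by (simp add: E1_eq)
  hence "- \<infinity> \<in> set (path_works ER ss j [j, i, i, i, sw i, sw i])" unfolding works by simp
  thus ?thesis by (simp add: total_work_def Let_def)
qed

end



context strat begin

lemma lamR_zero: "j < d \<Longrightarrow> j \<notin> AR \<Longrightarrow> lamR j = 0"
  using stR by (auto simp: AR_def finite_levels_def is_state_def)

lemma lamS_zero: "j < d \<Longrightarrow> j \<notin> CS \<Longrightarrow> lamS j = 0"
  using stS by (auto simp: CS_def finite_levels_def is_state_def)

lemma Bm_other: "j \<in> AR \<Longrightarrow> i \<notin> DD \<Longrightarrow> i \<noteq> j \<Longrightarrow> Bm i j = 0"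
  by (simp add: Bm_def Bmat_def)

lemma Bm_DD: "j \<in> AR \<Longrightarrow> i \<in> DD \<Longrightarrow> Bm i j = G (tau i) j / wA j"
  by (simp add: Bm_def Bmat_def)

lemma fl: "final_level j [j, i, i, i, sw i, sw i] = sw i" by (simp add: final_level_def)

lemma term_eq:
  assumes j: "j < d" and b: "b \<le> W"
  shows "lamR j * (Bm i j * (if ereal b \<le> total_work ER ss j [j, i, i, i, sw i, sw i] \<and> R (sw i) then 1 else 0))
       = lamR j * (Bm i j * (if i \<in> DD \<and> R (tau i) then 1 else 0))"
proof (cases "j \<in> AR")
  case False thus ?thesis using lamR_zero[OF j] by simp
next
  case jA: True
  show ?thesis
  proof (cases "i \<in> DD")
    case True
    thus ?thesis using K1[OF jA True] sw_tau[OF True] b by simp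
  next
    case False
    show ?thesis
    proof (cases "i = j")
      case True
      thus ?thesis using K2[of i j] jA False by simp
    next
      case F2: False
      thus ?thesis using Bm_other[OF jA False F2] by simp
    qed
  qed
qed

lemma mass: "(\<Sum>j<d. lamR j * (\<Sum>i<d. Bm i j * (if i \<in> DD \<and> Pr i then 1 else 0)))
   = (\<Sum>i\<in>DD. if Pr i then (1 - \<epsilon>) * lamS (tau i) else 0)"
proof -
  have "(\<Sum>j<d. lamR j * (\<Sum>i<d. Bm i j * (if i \<in> DD \<and> Pr i then 1 else 0)))
      = (\<Sum>j\<in>AR. lamR j * (\<Sum>i<d. Bm i j * (if i \<in> DD \<and> Pr i then 1 else 0)))"
    by (rule sum.mono_neutral_right) (use AR_sub lamR_zero in auto)
  also have "\<dots> = (\<Sum>j\<in>AR. \<Sum>i\<in>DD. if Pr i then G (tau i) j * block_height k T ER lamR j else 0)"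
  proof (intro sum.cong refl)
    fix j assume j: "j \<in> AR"
    have "(\<Sum>i<d. Bm i j * (if i \<in> DD \<and> Pr i then 1 else 0)) = (\<Sum>i<d. if i \<in> DD then Bm i j * (if Pr i then 1 else 0) else 0)"
      by (intro sum.cong) auto
    also have "\<dots> = (\<Sum>i\<in>{..<d} \<inter> DD. Bm i j * (if Pr i then 1 else 0))" by (simp add: sum.inter_restrict)
    also have "\<dots> = (\<Sum>i\<in>DD. Bm i j * (if Pr i then 1 else 0))"
    proof -
      have "{..<d} \<inter> DD = DD" using DD_sub by auto
      thus ?thesis by simp
    qed
    also have "\<dots> = (\<Sum>i\<in>DD. (if Pr i then G (tau i) j else 0) / wA j)"
      using j by (intro sum.cong refl) (simp add: Bm_DD)
    finally have "lamR j * (\<Sum>i<d. Bm i j * (if i \<in> DD \<and> Pr i then 1 else 0))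
        = (\<Sum>i\<in>DD. (if Pr i then G (tau i) j else 0) * (lamR j / wA j))"
      by (simp add: sum_distrib_left sum_divide_distrib mult.commute)
    also have "lamR j / wA j = block_height k T ER lamR j"
      unfolding wA_def by (rule height_eq) (use j in \<open>simp add: AR_def finite_levels_def\<close>)
    finally show "lamR j * (\<Sum>i<d. Bm i j * (if i \<in> DD \<and> Pr i then 1 else 0))
        = (\<Sum>i\<in>DD. if Pr i then G (tau i) j * block_height k T ER lamR j else 0)"
      by (auto intro!: sum.cong)
  qed
  also have "\<dots> = (\<Sum>i\<in>DD. \<Sum>j\<in>AR. if Pr i then G (tau i) j * block_height k T ER lamR j else 0)"
    by (rule sum.swap)
  also have "\<dots> = (\<Sum>i\<in>DD. if Pr i then (1 - \<epsilon>) * lamS (tau i) else 0)"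
  proof (intro sum.cong refl)
    fix i assume i: "i \<in> DD"
    show "(\<Sum>j\<in>AR. if Pr i then G (tau i) j * block_height k T ER lamR j else 0) =
        (if Pr i then (1 - \<epsilon>) * lamS (tau i) else 0)"
      using Gt[OF tau_in[OF i]] by simp
  qed
  finally show ?thesis .
qed

lemma prob_gen:
  assumes b: "b \<le> W"
  shows "prob_event d lamR ss (\<lambda>j ls. ereal b \<le> total_work ER ss j ls \<and> R (final_level j ls))
    = (\<Sum>i\<in>DD. if R (tau i) then (1 - \<epsilon>) * lamS (tau i) else 0)"
proof -
  have "prob_event d lamR ss (\<lambda>j ls. ereal b \<le> total_work ER ss j ls \<and> R (final_level j ls))
     = (\<Sum>j<d. lamR j * (\<Sum>i<d. Bm i j * (if ereal b \<le> total_work ER ss j [j, i, i, i, sw i, sw i] \<and> R (sw i) then 1 else 0)))"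
    unfolding prob_event_PE
  proof (intro sum.cong refl arg_cong2[where f="(*)"])
    fix j assume "j \<in> {..<d}"
    hence j: "j < d" by simp
    show "PE d ss j (\<lambda>ls. ereal b \<le> total_work ER ss j ls \<and> R (final_level j ls)) =
       (\<Sum>i<d. Bm i j * (if ereal b \<le> total_work ER ss j [j, i, i, i, sw i, sw i] \<and> R (sw i) then 1 else 0))"
      unfolding ss_def Pm_def
      by (subst PE_strategy[OF j sw_lt]) (simp_all add: fl[unfolded ss_def Pm_def] final_level_def)
  qed
  also have "\<dots> = (\<Sum>j<d. lamR j * (\<Sum>i<d. Bm i j * (if i \<in> DD \<and> R (tau i) then 1 else 0)))"
  proof (intro sum.cong refl)
    fix j assume "j \<in> {..<d}"
    hence j: "j < d" by simp
    show "lamR j * (\<Sum>i<d. Bm i j * (if ereal b \<le> total_work ER ss j [j, i, i, i, sw i, sw i] \<and> R (sw i) then 1 else 0))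
        = lamR j * (\<Sum>i<d. Bm i j * (if i \<in> DD \<and> R (tau i) then 1 else 0))"
      unfolding sum_distrib_left by (intro sum.cong refl) (rule term_eq[OF j b])
  qed
  also have "\<dots> = (\<Sum>i\<in>DD. if R (tau i) then (1 - \<epsilon>) * lamS (tau i) else 0)" by (rule mass)
  finally show ?thesis .
qed

lemma prob_total: "b \<le> W \<Longrightarrow> prob_event d lamR ss (\<lambda>j ls. ereal b \<le> total_work ER ss j ls) = 1 - \<epsilon>"
proof -
  assume b: "b \<le> W"
  have "prob_event d lamR ss (\<lambda>j ls. ereal b \<le> total_work ER ss j ls)
     = prob_event d lamR ss (\<lambda>j ls. ereal b \<le> total_work ER ss j ls \<and> (\<lambda>_. True) (final_level j ls))" by simp
  also have "\<dots> = (\<Sum>i\<in>DD. (1 - \<epsilon>) * lamS (tau i))" using prob_gen[OF b, of "\<lambda>_. True"] by simp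
  also have "\<dots> = (1 - \<epsilon>) * (\<Sum>c\<in>CS. lamS c)"
    using sum.reindex_bij_betw[OF tau_bij, of lamS] by (simp add: sum_distrib_left[symmetric])
  also have "(\<Sum>c\<in>CS. lamS c) = 1" using lam_sum_fin[OF stS] by (simp add: CS_def)
  finally show ?thesis by simp
qed

lemma prob_final: "b \<le> W \<Longrightarrow> c < d \<Longrightarrow>
  prob_event d lamR ss (\<lambda>j ls. ereal b \<le> total_work ER ss j ls \<and> final_level j ls = c) = (1 - \<epsilon>) * lamS c"
proof -
  assume b: "b \<le> W" and c: "c < d"
  have "prob_event d lamR ss (\<lambda>j ls. ereal b \<le> total_work ER ss j ls \<and> final_level j ls = c)
     = (\<Sum>i\<in>DD. if tau i = c then (1 - \<epsilon>) * lamS (tau i) else 0)" using prob_gen[OF b, of "\<lambda>x. x = c"] by simp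
  also have "\<dots> = (\<Sum>c'\<in>CS. if c' = c then (1 - \<epsilon>) * lamS c' else 0)"
    using sum.reindex_bij_betw[OF tau_bij, of "\<lambda>c'. if c' = c then (1 - \<epsilon>) * lamS c' else 0"] by simp
  also have "\<dots> = (if c \<in> CS then (1 - \<epsilon>) * lamS c else 0)"
    by (subst sum.delta) (use CS_sub finite_subset in auto)
  also have "\<dots> = (1 - \<epsilon>) * lamS c" using lamS_zero[OF c] by simp
  finally show ?thesis .
qed

end



lemma tgt_ok_scale:
  assumes ok: "tgt_ok C lt u t" and a: "a > 0" and b: "b \<ge> 0"
  shows "tgt_ok C lt (\<lambda>c. u c / a) (\<lambda>c. b * t c)"
proof -
  have e: "\<And>c. c \<in> C \<Longrightarrow> b * t c / (u c / a) = (a * b) * (t c / u c)"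
    using ok unfolding tgt_ok_def by (auto simp: field_simps)
  have m: "\<forall>x\<in>C. \<forall>y\<in>C. lt x y \<longrightarrow> t y / u y \<le> t x / u x" using ok unfolding tgt_ok_def by blast
  have "\<forall>x\<in>C. \<forall>y\<in>C. lt x y \<longrightarrow> b * t y / (u y / a) \<le> b * t x / (u x / a)"
  proof (intro ballI impI)
    fix x y assume x: "x \<in> C" and y: "y \<in> C" and l: "lt x y"
    have "t y / u y \<le> t x / u x" using m x y l by blast
    hence le: "(a * b) * (t y / u y) \<le> (a * b) * (t x / u x)" by (rule mult_left_mono) (use a b in simp)
    have "b * t y / (u y / a) = (a * b) * (t y / u y)" by (rule e[OF y])
    also have "\<dots> \<le> (a * b) * (t x / u x)" by (rule le)
    also have "\<dots> = b * t x / (u x / a)" by (rule e[OF x, symmetric])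
    finally show "b * t y / (u y / a) \<le> b * t x / (u x / a)" .
  qed
  moreover have "\<forall>c\<in>C. u c / a > 0 \<and> b * t c \<ge> 0"
    using tgt_okD(2,3)[OF ok] a b by simp
  moreover have "finite C" "\<forall>c\<in>C. \<not> lt c c" "\<forall>x\<in>C. \<forall>y\<in>C. \<forall>z\<in>C. lt x y \<longrightarrow> lt y z \<longrightarrow> lt x z"
     "\<forall>x\<in>C. \<forall>y\<in>C. x \<noteq> y \<longrightarrow> lt x y \<or> lt y x"
    using ok unfolding tgt_ok_def by blast+
  ultimately show ?thesis unfolding tgt_ok_def by (intro conjI) assumption+
qed

lemma LT_scale:
  assumes ok: "tgt_ok C lt u t" and a: "a > 0"
  shows "LT C lt (\<lambda>c. u c / a) (\<lambda>c. b * t c) y = b * LT C lt u t (y * a)"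
proof -
  have st: "st C lt (\<lambda>c. u c / a) c = st C lt u c / a" for c
    unfolding st_def by (simp add: sum_divide_distrib)
  have "LT C lt (\<lambda>c. u c / a) (\<lambda>c. b * t c) y =
        (\<Sum>c\<in>C. b * (t c / u c) * (a * ov (st C lt u c / a) (u c / a) 0 y))"
    unfolding LT_def st using a by (intro sum.cong refl) (simp add: field_simps)
  also have "\<dots> = (\<Sum>c\<in>C. b * (t c / u c) * ov (st C lt u c) (u c) 0 (y * a))"
    using a by (simp add: ov_scale)
  also have "\<dots> = b * LT C lt u t (y * a)" unfolding LT_def by (simp add: sum_distrib_left mult.assoc)
  finally show ?thesis .
qed

lemma LT_phys: "is_state d E lam \<Longrightarrow>
   LT (finite_levels d E) (ltB k T E lam) (\<lambda>i. bweight k T (E i)) lam y = Lst k T d E lam y"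
  unfolding LT_def Lst_def LB_def block_start_st[symmetric]
  by (intro sum.cong refl) (simp add: height_eq finite_levels_def)



theorem theorem1:
  fixes k T \<epsilon> :: real and n :: nat
    and E\<rho> E\<sigma> :: "nat \<Rightarrow> ereal" and lam\<rho> lam\<sigma> :: "nat \<Rightarrow> real"
  assumes "k > 0" and "T > 0"
    and "is_state (2 * n + 1) E\<rho> lam\<rho>" and "is_state (2 * n + 1) E\<sigma> lam\<sigma>"
    and "card {i. i < 2 * n + 1 \<and> lam\<rho> i = 0 \<and> E\<rho> i = \<infinity>} \<ge> n + 1"
    and "card {i. i < 2 * n + 1 \<and> lam\<sigma> i = 0 \<and> E\<sigma> i = \<infinity>} \<ge> n + 1"
    and "0 \<le> \<epsilon>" and "\<epsilon> < 1"
  shows "\<forall>\<delta>>0. \<exists>ss.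
     valid_strategy k T (2 * n + 1) E\<rho> ss \<and>
     (\<forall>i < 2 * n + 1. final_energies E\<rho> ss i = E\<sigma> i) \<and>
     (let d = 2 * n + 1;
          good = (\<lambda>j ls. total_work E\<rho> ss j ls \<ge>
                     ereal (work_bound k T d \<epsilon> E\<rho> lam\<rho> E\<sigma> lam\<sigma> - \<delta>));
          P = prob_event d lam\<rho> ss good;
          q = (\<lambda>i. prob_event d lam\<rho> ss (\<lambda>j ls. good j ls \<and> final_level j ls = i) / P)
      in P \<ge> 1 - \<epsilon> - \<delta> \<and> P > 0 \<and>
         (1/2) * (\<Sum>i<d. \<bar>q i - lam\<sigma> i\<bar>) \<le> \<delta>)"
proof (intro allI impI)
  fix \<delta> :: real assume \<delta>: "\<delta> > 0"
  define d where "d = 2 * n + 1"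
  have stR: "is_state d E\<rho> lam\<rho>" and stS: "is_state d E\<sigma> lam\<sigma>" using assms(3,4) by (simp_all add: d_def)
  have cR: "card {i. i < d \<and> lam\<rho> i = 0 \<and> E\<rho> i = \<infinity>} \<ge> n + 1"
    and cS: "card {i. i < d \<and> lam\<sigma> i = 0 \<and> E\<sigma> i = \<infinity>} \<ge> n + 1" using assms(5,6) by (simp_all add: d_def)
  have e0: "0 \<le> \<epsilon>" and e1: "\<epsilon> < 1" using assms(7,8) .
  define M where "M = rel_mixedness (\<lambda>x. gibbs_rescaling k T d E\<rho> lam\<rho> x / (1 - \<epsilon>)) (gibbs_rescaling k T d E\<sigma> lam\<sigma>)"
  have mix: "M > 0 \<and> (\<forall>l\<ge>0. (1 - \<epsilon>) * Lst k T d E\<sigma> lam\<sigma> (l * M) \<le> Lst k T d E\<rho> lam\<rho> l)"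
    unfolding M_def by (rule mixedness[OF stR stS e0 e1])
  have Mpos: "M > 0" using mix by simp
  have wb: "work_bound k T d \<epsilon> E\<rho> lam\<rho> E\<sigma> lam\<sigma> = k * T * ln M"
    by (simp add: work_bound_def M_def)
  define AR where "AR = finite_levels d E\<rho>"
  define IR where "IR = {i. i < d \<and> E\<rho> i = \<infinity>}"
  define CS where "CS = finite_levels d E\<sigma>"
  have finIR: "finite IR" and finCS: "finite CS" and finAR: "finite AR"
    by (auto simp: IR_def CS_def AR_def finite_levels_def)
  have cIR: "card IR \<ge> n + 1"
  proof -
    have "{i. i < d \<and> lam\<rho> i = 0 \<and> E\<rho> i = \<infinity>} \<subseteq> IR" by (auto simp: IR_def)
    hence "card {i. i < d \<and> lam\<rho> i = 0 \<and> E\<rho> i = \<infinity>} \<le> card IR" by (rule card_mono[OF finIR])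
    thus ?thesis using cR by simp
  qed
  have cCS: "card CS \<le> n"
  proof -
    let ?Z = "{i. i < d \<and> lam\<sigma> i = 0 \<and> E\<sigma> i = \<infinity>}"
    have "CS \<inter> ?Z = {}" by (auto simp: CS_def finite_levels_def)
    moreover have "CS \<union> ?Z \<subseteq> {..<d}" by (auto simp: CS_def finite_levels_def)
    have fZ: "finite ?Z" by simp
    have "card (CS \<union> ?Z) = card CS + card ?Z" by (rule card_Un_disjoint[OF finCS fZ \<open>CS \<inter> ?Z = {}\<close>])
    moreover have "card (CS \<union> ?Z) \<le> card {..<d}" by (rule card_mono[OF finite_lessThan \<open>CS \<union> ?Z \<subseteq> {..<d}\<close>])
    ultimately have "card CS + card ?Z \<le> d" by simp
    thus ?thesis using cS by (simp add: d_def)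
  qed
  have CSsplit: "card CS = card (CS \<inter> IR) + card (CS \<inter> AR)"
  proof -
    have "CS = (CS \<inter> IR) \<union> (CS \<inter> AR)" by (auto simp: CS_def IR_def AR_def finite_levels_def)
    moreover have "(CS \<inter> IR) \<inter> (CS \<inter> AR) = {}" by (auto simp: IR_def AR_def finite_levels_def)
    ultimately show ?thesis using finCS card_Un_disjoint[of "CS \<inter> IR" "CS \<inter> AR"] by simp
  qed
  have IRsplit: "card IR = card (IR - CS) + card (CS \<inter> IR)"
  proof -
    have "IR = (IR - CS) \<union> (CS \<inter> IR)" by auto
    moreover have "(IR - CS) \<inter> (CS \<inter> IR) = {}" by auto
    ultimately show ?thesis using finIR card_Un_disjoint[of "IR - CS" "CS \<inter> IR"] by simp
  qed
  have "card (CS \<inter> AR) \<le> card (IR - CS)" using cIR cCS CSsplit IRsplit by linarith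
  then obtain X where X: "X \<subseteq> IR - CS" "card X = card (CS \<inter> AR)" "finite X"
    by (rule obtain_subset_with_card_n)
  obtain \<kappa> where kap: "bij_betw \<kappa> X (CS \<inter> AR)"
    using finite_same_card_bij[OF X(3) _ X(2)] finAR by blast
  have tok: "tgt_ok CS (ltB k T E\<sigma> lam\<sigma>) (\<lambda>c. bweight k T (E\<sigma> c) / M) (\<lambda>c. (1 - \<epsilon>) * lam\<sigma> c)"
    unfolding CS_def by (rule tgt_ok_scale[OF phys_tgt_ok[OF stS] Mpos]) (use e1 in simp)
  have sok: "src_ok AR (\<lambda>i. bweight k T (E\<rho> i)) (block_height k T E\<rho> lam\<rho>) (block_start k T d E\<rho> lam\<rho>)"
    unfolding AR_def by (rule phys_src_ok[OF stR])
  have dom: "LB AR (\<lambda>i. bweight k T (E\<rho> i)) (block_height k T E\<rho> lam\<rho>) (block_start k T d E\<rho> lam\<rho>) y \<ge>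
      LT CS (ltB k T E\<sigma> lam\<sigma>) (\<lambda>c. bweight k T (E\<sigma> c) / M) (\<lambda>c. (1 - \<epsilon>) * lam\<sigma> c) y" if y: "y \<ge> 0" for y
  proof -
    have "LT CS (ltB k T E\<sigma> lam\<sigma>) (\<lambda>c. bweight k T (E\<sigma> c) / M) (\<lambda>c. (1 - \<epsilon>) * lam\<sigma> c) y
        = (1 - \<epsilon>) * Lst k T d E\<sigma> lam\<sigma> (y * M)"
      unfolding CS_def LT_scale[OF phys_tgt_ok[OF stS] Mpos] LT_phys[OF stS] ..
    also have "\<dots> \<le> Lst k T d E\<rho> lam\<rho> y" using mix y by blast
    finally show ?thesis by (simp add: Lst_def AR_def)
  qed
  obtain G where G: "\<forall>c a. G c a \<ge> 0" "\<forall>a\<in>AR. (\<Sum>c\<in>CS. G c a) \<le> bweight k T (E\<rho> a)"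
      "\<forall>c\<in>CS. (\<Sum>a\<in>AR. G c a) \<le> bweight k T (E\<sigma> c) / M"
      "\<forall>c\<in>CS. (\<Sum>a\<in>AR. G c a * block_height k T E\<rho> lam\<rho> a) = (1 - \<epsilon>) * lam\<sigma> c"
    using core[OF tok sok dom] by blast
  interpret S: strat k T \<epsilon> d E\<rho> E\<sigma> lam\<rho> lam\<sigma> M AR IR CS X "(CS \<inter> IR) \<union> X" \<kappa> G
    by unfold_locales (use assms(1,2) stR stS e0 e1 Mpos X(1) kap G in \<open>auto simp: AR_def IR_def CS_def\<close>)
  have bW: "k * T * ln M - \<delta> \<le> S.W" using \<delta> by (simp add: S.W_def)
  have P: "prob_event d lam\<rho> S.ss (\<lambda>j ls. ereal (k * T * ln M - \<delta>) \<le> total_work E\<rho> S.ss j ls) = 1 - \<epsilon>"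
    by (rule S.prob_total[OF bW])
  have Q: "prob_event d lam\<rho> S.ss (\<lambda>j ls. ereal (k * T * ln M - \<delta>) \<le> total_work E\<rho> S.ss j ls \<and> final_level j ls = i)
     = (1 - \<epsilon>) * lam\<sigma> i" if "i < d" for i
    by (rule S.prob_final[OF bW that])
  have tv: "(1/2) * (\<Sum>i<d. \<bar>(1 - \<epsilon>) * lam\<sigma> i / (1 - \<epsilon>) - lam\<sigma> i\<bar>) \<le> \<delta>"
    using e1 \<delta> by simp
  show "\<exists>ss. valid_strategy k T (2 * n + 1) E\<rho> ss \<and>
     (\<forall>i < 2 * n + 1. final_energies E\<rho> ss i = E\<sigma> i) \<and>
     (let d = 2 * n + 1;
          good = (\<lambda>j ls. total_work E\<rho> ss j ls \<ge>
                     ereal (work_bound k T d \<epsilon> E\<rho> lam\<rho> E\<sigma> lam\<sigma> - \<delta>));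
          P = prob_event d lam\<rho> ss good;
          q = (\<lambda>i. prob_event d lam\<rho> ss (\<lambda>j ls. good j ls \<and> final_level j ls = i) / P)
      in P \<ge> 1 - \<epsilon> - \<delta> \<and> P > 0 \<and>
         (1/2) * (\<Sum>i<d. \<bar>q i - lam\<sigma> i\<bar>) \<le> \<delta>)"
  proof (intro exI[of _ S.ss] conjI)
    show "valid_strategy k T (2 * n + 1) E\<rho> S.ss" using S.valid by (simp add: d_def)
    show "\<forall>i < 2 * n + 1. final_energies E\<rho> S.ss i = E\<sigma> i" using S.final by (simp add: d_def)
    have sumeq: "(\<Sum>i<d. \<bar>prob_event d lam\<rho> S.ss (\<lambda>j ls. ereal (k * T * ln M - \<delta>) \<le> total_work E\<rho> S.ss j ls \<and> final_level j ls = i) / (1 - \<epsilon>) - lam\<sigma> i\<bar>)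
        = (\<Sum>i<d. \<bar>(1 - \<epsilon>) * lam\<sigma> i / (1 - \<epsilon>) - lam\<sigma> i\<bar>)"
      by (intro sum.cong refl) (simp add: Q)
    show "let d = 2 * n + 1;
          good = (\<lambda>j ls. total_work E\<rho> S.ss j ls \<ge>
                     ereal (work_bound k T d \<epsilon> E\<rho> lam\<rho> E\<sigma> lam\<sigma> - \<delta>));
          P = prob_event d lam\<rho> S.ss good;
          q = (\<lambda>i. prob_event d lam\<rho> S.ss (\<lambda>j ls. good j ls \<and> final_level j ls = i) / P)
      in P \<ge> 1 - \<epsilon> - \<delta> \<and> P > 0 \<and>
         (1/2) * (\<Sum>i<d. \<bar>q i - lam\<sigma> i\<bar>) \<le> \<delta>"
      unfolding Let_def d_def[symmetric] wb P sumeq using tv e1 \<delta> by simp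
  qed
qed



end
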